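(* Let $(\mathcal{P},\Sigma,\mu)$ be a measure space with $\mathcal{P}\subseteq\mathbb{C}^{n_p}$, such that $\overline{\mathsf{p}}\in\mathcal{P}$ for all $\mathsf{p}\in\mathcal{P}$, $\overline{S}\in\Sigma$ for all $S\in\Sigma$, and $\mu(\overline{S})=\mu(S)$ for all $S\in\Sigma$. Let $y:\mathcal{P}\to\mathbb{C}^{n_o\times n_f}$ be measurable, square-integrable ($\int_{\mathcal{P}}\|y(\mathsf{p})\|_F^2\,d\mu(\mathsf{p})<\infty$), and satisfy $\overline{y(\mathsf{p})}=y(\overline{\mathsf{p}})$ for all $\mathsf{p}\in\mathcal{P}$. Let $\hat\alpha_i,\hat\beta_j,\hat\gamma_k:\mathcal{P}\to\mathbb{C}$ ($i=1,\dots,q_A$, $j=1,\dots,q_B$, $k=1,\dots,q_C$) be measurable functions with $f(\overline{\mathsf{p}})=\overline{f(\mathsf{p})}$ for each such $f$ and all $\mathsf{p}$, and \[ \int_{\mathcal{P}}\left(\frac{\sum_{j=1}^{q_B}|\hat\beta_j(\mathsf{p})|\,\sum_{k=1}^{q_C}|\hat\gamma_k(\mathsf{p})|}{\sum_{i=1}^{q_A}|\hat\alpha_i(\mathsf{p})|}\right)^{2}\,d\mu(\mathsf{p})<\infty . \] For $(\hat A_i,\hat B_j,\hat C_k)\in R=(\mathbb{R}^{r\times r})^{q_A}\times(\mathbb{R}^{r\times n_f})^{q_B}\times(\mathbb{R}^{n_o\times r})^{q_C}$ let $\hat{\mathcal{A}}(\mathsf{p})=\sum_{i}\hat\alpha_i(\mathsf{p})\hat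 A_i$, $\hat{\mathcal{B}}(\mathsf{p})=\sum_{j}\hat\beta_j(\mathsf{p})\hat B_j$, $\hat{\mathcal{C}}(\mathsf{p})=\sum_{k}\hat\gamma_k(\mathsf{p})\hat C_k$, and let $\mathcal{R}\subseteq R$ be the set of tuples with $\operatorname*{ess\,sup}_{\mathsf{p}\in\mathcal{P}}\|\hat\alpha_i(\mathsf{p})\hat{\mathcal{A}}(\mathsf{p})^{-1}\|_F<\infty$ for all $i=1,\dots,q_A$. For a tuple in $\mathcal{R}$ define $\hat x(\mathsf{p})=\hat{\mathcal{A}}(\mathsf{p})^{-1}\hat{\mathcal{B}}(\mathsf{p})$, $\hat y(\mathsf{p})=\hat{\mathcal{C}}(\mathsf{p})\hat x(\mathsf{p})$, the dual state $\hat x_d(\mathsf{p})=\hat{\mathcal{A}}(\mathsf{p})^{-*}\hat{\mathcal{C}}(\mathsf{p})^{*}$, and \[ \mathcal{J}(\hat A_i,\hat B_j,\hat C_k)=\int_{\mathcal{P}}\|y(\mathsf{p})-\hat y(\mathsf{p})\|_F^2\,d\mu(\mathsf{p}). \] Then for any $(\hat A_i,\hat B_j,\hat C_k)\in\mathcal{R}$, the gradients of $\mathcal{J}$ with respect to the reduced matrices are \begin{align*} \nabla_{\hat A_i}\mathcal{J}&=2\int_{\mathcal{P}}\hat\alpha_i(\overline{\mathsf{p}})\,\hat x_d(\mathsf{p})\,[y(\mathsf{p})-\hat y(\mathsf{p})]\,\hat x(\mathsf{p})^{*}\,d\mu(\mathsf{p}),&i=1,\dots,q_A,\\ \nabla_{\hat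 B_j}\mathcal{J}&=2\int_{\mathcal{P}}\hat\beta_j(\overline{\mathsf{p}})\,\hat x_d(\mathsf{p})\,[\hat y(\mathsf{p})-y(\mathsf{p})]\,d\mu(\mathsf{p}),&j=1,\dots,q_B,\\ \nabla_{\hat C_k}\mathcal{J}&=2\int_{\mathcal{P}}\hat\gamma_k(\overline{\mathsf{p}})\,[\hat y(\mathsf{p})-y(\mathsf{p})]\,\hat x(\mathsf{p})^{*}\,d\mu(\mathsf{p}),&k=1,\dots,q_C. \end{align*}
   Context: $\|\cdot\|_F$ is the Frobenius norm, $(\cdot)^*$ the conjugate transpose, $M^{-*}=(M^{-1})^*$. For a Fréchet differentiable real-valued function $f$ on an open subset of a real Hilbert space, the gradient $\nabla f(x)$ is the unique element with $f(x+h)=f(x)+\langle\nabla f(x),h\rangle+o(\|h\|)$; partial gradients with respect to one matrix argument are defined analogously, using the Frobenius inner product $\langle X,Y\rangle=\operatorname{trace}(X^{\mathrm T}Y)$ on real matrices. The essential supremum is with respect to $\mu$. *)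

theory Defs
  imports "HOL-Analysis.Analysis" "HOL-Probability.Essential_Supremum"
begin

text \<open>Complex matrices are rendered as complex^'n^'m (m rows, n columns),
  real matrices as real^'n^'m. The norm on these types is the Frobenius norm,
  and the inner product on real^'n^'m is the Frobenius inner product trace(X^T Y).\<close>

definition cvec_cnj :: "complex^'n \<Rightarrow> complex^'n" where
  "cvec_cnj p = (\<chi> i. cnj (p $ i))"

definition cmat_cnj :: "complex^'n^'m \<Rightarrow> complex^'n^'m" where
  "cmat_cnj X = (\<chi> a b. cnj (X $ a $ b))"

definition cmat_adj :: "complex^'n^'m \<Rightarrow> complex^'m^'n" where
  "cmat_adj X = (\<chi> a b. cnj (X $ b $ a))"

definition cmat_of_real :: "real^'n^'m \<Rightarrow> complex^'n^'m" where
  "cmat_of_real X = (\<chi> a b. complex_of_real (X $ a $ b))"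

definition csmult :: "complex \<Rightarrow> complex^'n^'m \<Rightarrow> complex^'n^'m" where
  "csmult c X = (\<chi> a b. c * X $ a $ b)"

definition pmat :: "('q::finite \<Rightarrow> 'p \<Rightarrow> complex) \<Rightarrow> ('q \<Rightarrow> real^'n^'m) \<Rightarrow> 'p \<Rightarrow> complex^'n^'m" where
  "pmat f A p = (\<Sum>i\<in>UNIV. csmult (f i p) (cmat_of_real (A i)))"

definition xhat where
  "xhat alpha beta A B p = matrix_inv (pmat alpha A p) ** pmat beta B p"

definition yhat where
  "yhat alpha beta gamma A B C p = pmat gamma C p ** xhat alpha beta A B p"

definition xdual where
  "xdual alpha gamma A C p = cmat_adj (matrix_inv (pmat alpha A p)) ** cmat_adj (pmat gamma C p)"

definition admissible :: "'pp measure \<Rightarrow> ('qa::finite \<Rightarrow> 'pp \<Rightarrow> complex) \<Rightarrow> ('qa \<Rightarrow> real^'r^'r) \<Rightarrow> bool" where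
  "admissible \<mu> alpha A \<longleftrightarrow>
     (AE p in \<mu>. invertible (pmat alpha A p)) \<and>
     (\<forall>i. esssup \<mu> (\<lambda>p. ereal (norm (csmult (alpha i p) (matrix_inv (pmat alpha A p))))) < \<infinity>)"

definition Jcost where
  "Jcost \<mu> y alpha beta gamma A B C =
     (\<integral>p. (norm (y p - yhat alpha beta gamma A B C p))\<^sup>2 \<partial>\<mu>)"

end

theory Submission
  imports Defs
begin


lemma norm_vec_sq: "(norm (x::'a::real_normed_vector^'n))^2 = (\<Sum>i\<in>UNIV. (norm (x$i))^2)"
  by (simp add: norm_vec_def L2_set_def sum_nonneg)

lemma norm_mat_sq: "(norm (X::'a::real_normed_vector^'n^'m))^2 = (\<Sum>a\<in>UNIV. \<Sum>b\<in>UNIV. (norm (X$a$b))^2)"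
  by (simp add: norm_vec_sq)

lemma cs_sq:
  fixes x y :: "'b \<Rightarrow> complex"
  shows "(cmod (\<Sum>b\<in>S. x b * y b))^2 \<le> (\<Sum>b\<in>S. (cmod (x b))^2) * (\<Sum>b\<in>S. (cmod (y b))^2)"
proof -
  have "cmod (\<Sum>b\<in>S. x b * y b) \<le> (\<Sum>b\<in>S. cmod (x b) * cmod (y b))"
    by (metis (no_types, lifting) norm_mult norm_sum sum.cong)
  then have "(cmod (\<Sum>b\<in>S. x b * y b))^2 \<le> (\<Sum>b\<in>S. cmod (x b) * cmod (y b))^2"
    by (simp add: power_mono)
  also have "\<dots> \<le> (\<Sum>b\<in>S. (cmod (x b))^2) * (\<Sum>b\<in>S. (cmod (y b))^2)"
    by (rule Cauchy_Schwarz_ineq_sum)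
  finally show ?thesis .
qed

lemma norm_mm: "norm ((X::complex^'k^'m) ** (Y::complex^'n^'k)) \<le> norm X * norm Y"
proof -
  have "(norm (X ** Y))^2 = (\<Sum>a\<in>UNIV. \<Sum>c\<in>UNIV. (cmod (\<Sum>b\<in>UNIV. X$a$b * Y$b$c))^2)"
    by (simp add: norm_mat_sq matrix_matrix_mult_def)
  also have "\<dots> \<le> (\<Sum>a\<in>UNIV. \<Sum>c\<in>UNIV. (\<Sum>b\<in>UNIV. (cmod (X$a$b))^2) * (\<Sum>b\<in>UNIV. (cmod (Y$b$c))^2))"
    by (intro sum_mono cs_sq)
  also have "\<dots> = (\<Sum>a\<in>UNIV. \<Sum>b\<in>UNIV. (cmod (X$a$b))^2) * (\<Sum>c\<in>UNIV. \<Sum>b\<in>UNIV. (cmod (Y$b$c))^2)"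
    by (rule sum_product[symmetric])
  also have "\<dots> = (norm X)^2 * (norm Y)^2"
    by (simp only: norm_mat_sq sum.swap[of "\<lambda>c b. (cmod (Y$b$c))^2" UNIV UNIV])
  finally have "(norm (X ** Y))^2 \<le> (norm X * norm Y)^2" by (simp add: power_mult_distrib)
  then show ?thesis by (rule power2_le_imp_le) simp
qed

lemma norm_mv: "norm ((X::complex^'k^'m) *v (v::complex^'k)) \<le> norm X * norm v"
proof -
  have "(norm (X *v v))^2 = (\<Sum>a\<in>UNIV. (cmod (\<Sum>b\<in>UNIV. X$a$b * v$b))^2)"
    by (simp add: norm_vec_sq matrix_vector_mult_def)
  also have "\<dots> \<le> (\<Sum>a\<in>UNIV. (\<Sum>b\<in>UNIV. (cmod (X$a$b))^2) * (\<Sum>b\<in>UNIV. (cmod (v$b))^2))"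
    by (intro sum_mono cs_sq)
  also have "\<dots> = (\<Sum>a\<in>UNIV. (\<Sum>b\<in>UNIV. (cmod (X$a$b))^2)) * (\<Sum>b\<in>UNIV. (cmod (v$b))^2)"
    by (rule sum_distrib_right[symmetric])
  also have "\<dots> = (norm X)^2 * (norm v)^2"
    by (simp only: norm_mat_sq norm_vec_sq)
  finally have "(norm (X *v v))^2 \<le> (norm X * norm v)^2" by (simp add: power_mult_distrib)
  then show ?thesis by (rule power2_le_imp_le) simp
qed

lemma norm_csmult: "norm (csmult c X) = cmod c * norm X"
proof -
  have "(norm (csmult c X))^2 = (cmod c * norm X)^2"
    by (simp add: norm_mat_sq csmult_def power_mult_distrib norm_mult sum_distrib_left)
  then show ?thesis by (simp add: power2_eq_iff_nonneg)
qed

lemma norm_cmat_of_real: "norm (cmat_of_real X) = norm X"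
proof -
  have "(norm (cmat_of_real X))^2 = (norm X)^2"
    by (simp add: norm_mat_sq cmat_of_real_def)
  then show ?thesis by (simp add: power2_eq_iff_nonneg)
qed

lemma norm_adj: "norm (cmat_adj X) = norm X"
proof -
  have "(norm (cmat_adj X))^2 = (norm X)^2"
    by (simp add: norm_mat_sq cmat_adj_def, subst sum.swap, rule refl)
  then show ?thesis by (simp add: power2_eq_iff_nonneg)
qed


lemma mm_add_r: "((A::'a::ring_1^'n^'m) + B) ** C = A ** C + B ** C"
  by (simp add: matrix_matrix_mult_def vec_eq_iff distrib_right sum.distrib)
lemma mm_diff_r: "((A::'a::ring_1^'n^'m) - B) ** C = A ** C - B ** C"
  by (simp add: matrix_matrix_mult_def vec_eq_iff left_diff_distrib sum_subtractf)
lemma mm_diff_l: "(A::'a::ring_1^'n^'m) ** (B - C) = A ** B - A ** C"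
  by (simp add: matrix_matrix_mult_def vec_eq_iff right_diff_distrib sum_subtractf)
lemma mm_neg_l: "(- (A::'a::ring_1^'n^'m)) ** B = - (A ** B)"
  by (simp add: matrix_matrix_mult_def vec_eq_iff sum_negf)
lemma mm_neg_r: "(A::'a::ring_1^'n^'m) ** (- B) = - (A ** B)"
  by (simp add: matrix_matrix_mult_def vec_eq_iff sum_negf)
lemma mm_zero_l: "(0::'a::ring_1^'n^'m) ** B = 0"
  by (simp add: matrix_matrix_mult_def vec_eq_iff)
lemma mm_zero_r: "(A::'a::ring_1^'n^'m) ** 0 = 0"
  by (simp add: matrix_matrix_mult_def vec_eq_iff)

lemma csmult_mult_left: "csmult c X ** Y = csmult c (X ** Y)"
  by (simp add: csmult_def matrix_matrix_mult_def vec_eq_iff sum_distrib_left mult.assoc)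
lemma csmult_mult_right: "X ** csmult c Y = csmult c (X ** Y)"
  by (simp add: csmult_def matrix_matrix_mult_def vec_eq_iff sum_distrib_left ac_simps)
lemma csmult_add: "csmult c (X + Y) = csmult c X + csmult c Y"
  by (simp add: csmult_def vec_eq_iff distrib_left)
lemma csmult_diff: "csmult c (X - Y) = csmult c X - csmult c Y"
  by (simp add: csmult_def vec_eq_iff right_diff_distrib)
lemma csmult_neg: "csmult c (- X) = - csmult c X"
  by (simp add: csmult_def vec_eq_iff)
lemma csmult_neg_scalar: "csmult (- c) X = - csmult c X"
  by (simp add: csmult_def vec_eq_iff)
lemma csmult_csmult: "csmult a (csmult b X) = csmult (a * b) X"
  by (simp add: csmult_def vec_eq_iff)
lemma csmult_one[simp]: "csmult 1 X = X"
  by (simp add: csmult_def vec_eq_iff)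
lemma csmult_zero[simp]: "csmult 0 X = 0"
  by (simp add: csmult_def vec_eq_iff)
lemma csmult_zero_right[simp]: "csmult c 0 = 0"
  by (simp add: csmult_def vec_eq_iff)

lemma cmat_of_real_diff: "cmat_of_real (X - Y) = cmat_of_real X - cmat_of_real Y"
  by (simp add: cmat_of_real_def vec_eq_iff)
lemma cmat_of_real_add: "cmat_of_real (X + Y) = cmat_of_real X + cmat_of_real Y"
  by (simp add: cmat_of_real_def vec_eq_iff)
lemma cmat_of_real_scaleR: "cmat_of_real (r *\<^sub>R X) = csmult (complex_of_real r) (cmat_of_real X)"
  by (simp add: cmat_of_real_def csmult_def vec_eq_iff)
lemma cmat_of_real_zero[simp]: "cmat_of_real 0 = 0"
  by (simp add: cmat_of_real_def vec_eq_iff)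

lemma adj_mult: "cmat_adj (X ** Y) = cmat_adj Y ** cmat_adj X"
  by (simp add: cmat_adj_def matrix_matrix_mult_def vec_eq_iff mult.commute)
lemma adj_csmult: "cmat_adj (csmult c X) = csmult (cnj c) (cmat_adj X)"
  by (simp add: cmat_adj_def csmult_def vec_eq_iff)
lemma adj_adj[simp]: "cmat_adj (cmat_adj X) = X"
  by (simp add: cmat_adj_def vec_eq_iff)
lemma adj_neg: "cmat_adj (- X) = - cmat_adj X"
  by (simp add: cmat_adj_def vec_eq_iff)
lemma adj_diff: "cmat_adj (X - Y) = cmat_adj X - cmat_adj Y"
  by (simp add: cmat_adj_def vec_eq_iff)
lemma adj_mat1: "cmat_adj (mat 1) = mat 1"
  by (simp add: cmat_adj_def mat_def vec_eq_iff)

lemma cnj_mult: "cmat_cnj (X ** Y) = cmat_cnj X ** cmat_cnj Y"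
  by (simp add: cmat_cnj_def matrix_matrix_mult_def vec_eq_iff)
lemma cnj_add: "cmat_cnj (X + Y) = cmat_cnj X + cmat_cnj Y"
  by (simp add: cmat_cnj_def vec_eq_iff)
lemma cnj_diff: "cmat_cnj (X - Y) = cmat_cnj X - cmat_cnj Y"
  by (simp add: cmat_cnj_def vec_eq_iff)
lemma cnj_neg: "cmat_cnj (- X) = - cmat_cnj X"
  by (simp add: cmat_cnj_def vec_eq_iff)
lemma cnj_csmult: "cmat_cnj (csmult c X) = csmult (cnj c) (cmat_cnj X)"
  by (simp add: cmat_cnj_def csmult_def vec_eq_iff)
lemma cnj_adj: "cmat_cnj (cmat_adj X) = cmat_adj (cmat_cnj X)"
  by (simp add: cmat_cnj_def cmat_adj_def vec_eq_iff)
lemma cnj_of_real[simp]: "cmat_cnj (cmat_of_real X) = cmat_of_real X"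
  by (simp add: cmat_cnj_def cmat_of_real_def vec_eq_iff)
lemma cnj_cnj[simp]: "cmat_cnj (cmat_cnj X) = X"
  by (simp add: cmat_cnj_def vec_eq_iff)
lemma cnj_mat1: "cmat_cnj (mat 1) = mat 1"
  by (simp add: cmat_cnj_def mat_def vec_eq_iff)
lemma cnj_zero[simp]: "cmat_cnj 0 = 0"
  by (simp add: cmat_cnj_def vec_eq_iff)
lemma cnj_sum: "cmat_cnj (\<Sum>i\<in>S. f i) = (\<Sum>i\<in>S. cmat_cnj (f i))"
  by (induction S rule: infinite_finite_induct) (simp_all add: cnj_add)
lemma cvec_cnj_cnj[simp]: "cvec_cnj (cvec_cnj p) = p"
  by (simp add: cvec_cnj_def vec_eq_iff)

lemma matrix_inv_props:
  assumes "invertible (X::'a::semiring_1^'n^'m)"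
  shows "X ** matrix_inv X = mat 1" "matrix_inv X ** X = mat 1"
proof -
  have "\<exists>A'. X ** A' = mat 1 \<and> A' ** X = mat 1" using assms invertible_def by blast
  then have "X ** matrix_inv X = mat 1 \<and> matrix_inv X ** X = mat 1"
    unfolding matrix_inv_def by (rule someI_ex)
  then show "X ** matrix_inv X = mat 1" "matrix_inv X ** X = mat 1" by auto
qed

lemma invertible_cnj: "invertible (cmat_cnj X) \<longleftrightarrow> invertible X"
proof
  assume "invertible (cmat_cnj X)"
  then obtain Y where "cmat_cnj X ** Y = mat 1" "Y ** cmat_cnj X = mat 1" using invertible_def by blast
  then have "X ** cmat_cnj Y = mat 1" "cmat_cnj Y ** X = mat 1"
    by (metis cnj_cnj cnj_mult cnj_mat1)+
  then show "invertible X" using invertible_def by blast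
next
  assume "invertible X"
  then obtain Y where "X ** Y = mat 1" "Y ** X = mat 1" using invertible_def by blast
  then have "cmat_cnj X ** cmat_cnj Y = mat 1" "cmat_cnj Y ** cmat_cnj X = mat 1"
    by (metis cnj_mult cnj_mat1)+
  then show "invertible (cmat_cnj X)" using invertible_def by blast
qed

lemma inv_unique:
  fixes X :: "'a::field^'n^'n"
  assumes "X ** Y = mat 1" shows "matrix_inv X = Y"
proof -
  have inv: "invertible X" using assms invertible_right_inverse by blast
  have "matrix_inv X = matrix_inv X ** (X ** Y)" using assms by simp
  also have "\<dots> = Y" by (simp add: matrix_mul_assoc matrix_inv_props[OF inv])
  finally show ?thesis .
qed

lemma matrix_inv_cnj:
  assumes "invertible (X::complex^'n^'n)"
  shows "matrix_inv (cmat_cnj X) = cmat_cnj (matrix_inv X)"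
  by (rule inv_unique) (metis cnj_mult cnj_mat1 matrix_inv_props(1)[OF assms])

lemma pmat_upd: "pmat f (X(i:=H)) p = pmat f X p + csmult (f i p) (cmat_of_real (H - X i))"
proof -
  have "pmat f (X(i:=H)) p = (\<Sum>j\<in>UNIV. csmult (f j p) (cmat_of_real (X j))) - csmult (f i p) (cmat_of_real (X i)) + csmult (f i p) (cmat_of_real H)"
    unfolding pmat_def
    by (simp add: sum.remove[of UNIV i] algebra_simps)
  then show ?thesis by (simp add: pmat_def cmat_of_real_diff csmult_diff)
qed

lemma pmat_cnj:
  assumes "\<And>i. f i q = cnj (f i p)"
  shows "pmat f X q = cmat_cnj (pmat f X p)"
  by (simp add: pmat_def cnj_sum cnj_csmult assms)

lemma norm_pmat: "norm (pmat f X p) \<le> (\<Sum>i\<in>UNIV. cmod (f i p)) * (\<Sum>i\<in>UNIV. norm (X i))"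
proof -
  have "norm (pmat f X p) \<le> (\<Sum>i\<in>UNIV. cmod (f i p) * norm (X i))"
    unfolding pmat_def by (rule order.trans[OF norm_sum]) (simp add: norm_csmult norm_cmat_of_real)
  also have "\<dots> \<le> (\<Sum>i\<in>UNIV. cmod (f i p) * (\<Sum>i\<in>UNIV. norm (X i)))"
    by (intro sum_mono mult_left_mono member_le_sum) auto
  also have "\<dots> = (\<Sum>i\<in>UNIV. cmod (f i p)) * (\<Sum>i\<in>UNIV. norm (X i))"
    by (simp add: sum_distrib_right)
  finally show ?thesis .
qed


lemma perturb:
  fixes X P :: "complex^'n^'n"
  assumes inv: "invertible X" and small: "norm (matrix_inv X ** P) \<le> 1/2"
  shows "invertible (X + P)"
    and "norm (matrix_inv (X + P)) \<le> 2 * norm (matrix_inv X)"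
    and "matrix_inv X = matrix_inv (X + P) + matrix_inv X ** P ** matrix_inv (X + P)"
proof -
  let ?Xi = "matrix_inv X"
  let ?N = "?Xi ** P"
  have ker: "\<forall>v. (mat 1 + ?N) *v v = 0 \<longrightarrow> v = 0"
  proof (intro allI impI)
    fix v assume "(mat 1 + ?N) *v v = 0"
    then have "v + ?N *v v = 0" by (simp add: matrix_vector_mult_add_rdistrib)
    then have "v = - (?N *v v)" by (simp add: eq_neg_iff_add_eq_0)
    then have "norm v = norm (?N *v v)" by (metis norm_minus_cancel)
    also have "\<dots> \<le> norm ?N * norm v" by (rule norm_mv)
    also have "\<dots> \<le> 1/2 * norm v" by (rule mult_right_mono[OF small]) simp
    finally show "v = 0" by simp
  qed
  then have "\<exists>B. B ** (mat 1 + ?N) = mat 1" using matrix_left_invertible_ker by blast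
  then have i1: "invertible (mat 1 + ?N)" using invertible_left_inverse by blast
  have eq: "X + P = X ** (mat 1 + ?N)"
    by (simp add: matrix_add_ldistrib matrix_mul_assoc matrix_inv_props[OF inv])
  show invXP: "invertible (X + P)" unfolding eq by (rule invertible_mult[OF inv i1])
  let ?Z = "matrix_inv (X + P)"
  have "?Xi = ?Xi ** ((X + P) ** ?Z)" by (simp add: matrix_inv_props[OF invXP])
  also have "\<dots> = ?Z + ?N ** ?Z"
    by (simp add: matrix_add_ldistrib mm_add_r matrix_mul_assoc matrix_inv_props[OF inv])
  finally show id: "?Xi = ?Z + ?Xi ** P ** ?Z" .
  have "norm ?Z = norm (?Xi - ?N ** ?Z)" using id by (metis add_diff_cancel_right')
  also have "\<dots> \<le> norm ?Xi + norm (?N ** ?Z)" by (rule norm_triangle_ineq4)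
  also have "\<dots> \<le> norm ?Xi + norm ?N * norm ?Z" using norm_mm by (simp add: add_left_mono)
  also have "\<dots> \<le> norm ?Xi + 1/2 * norm ?Z" by (intro add_left_mono mult_right_mono small) simp
  finally show "norm ?Z \<le> 2 * norm ?Xi" by simp
qed

lemma remainder_identity:
  fixes Xi Z P :: "complex^'n^'n" and C :: "complex^'n^'m" and B :: "complex^'k^'n"
  assumes id: "Xi = Z + Xi ** P ** Z"
  shows "C ** (Z ** B) - C ** (Xi ** B) - (- (C ** (Xi ** (P ** (Xi ** B)))))
       = C ** (Xi ** (P ** (Xi ** (P ** (Z ** B)))))"
proof -
  have "Z - Xi + Xi ** (P ** Xi) = Xi ** (P ** (Xi - Z))"
    by (simp add: mm_diff_l matrix_mul_assoc)
       (metis id add_diff_cancel_left' diff_add_eq_diff_diff_swap diff_self minus_diff_eq matrix_mul_assoc)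
  also have "Xi - Z = Xi ** P ** Z" using id by (metis add_diff_cancel_left')
  finally have e: "Z - Xi + Xi ** (P ** Xi) = Xi ** (P ** (Xi ** (P ** Z)))"
    by (simp add: matrix_mul_assoc)
  have "C ** (Z ** B) - C ** (Xi ** B) - (- (C ** (Xi ** (P ** (Xi ** B)))))
      = C ** ((Z - Xi + Xi ** (P ** Xi)) ** B)"
    by (simp add: mm_diff_l mm_diff_r mm_add_r matrix_add_ldistrib matrix_mul_assoc)
  also have "\<dots> = C ** (Xi ** (P ** (Xi ** (P ** (Z ** B)))))"
    unfolding e by (simp add: matrix_mul_assoc)
  finally show ?thesis .
qed


lemma cont_mm: "continuous_on UNIV (\<lambda>x::(complex^'k^'m) \<times> (complex^'n^'k). fst x ** snd x)"
  unfolding matrix_matrix_mult_def by (intro continuous_intros)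

lemma cont_cs: "continuous_on UNIV (\<lambda>x::complex \<times> (complex^'n^'m). csmult (fst x) (snd x))"
  unfolding csmult_def by (intro continuous_intros)

lemma cont_adj: "continuous_on UNIV (\<lambda>x::complex^'n^'m. cmat_adj x)"
  unfolding cmat_adj_def by (intro continuous_intros)

lemma cont_cnj: "continuous_on UNIV (\<lambda>x::complex^'n^'m. cmat_cnj x)"
  unfolding cmat_cnj_def by (intro continuous_intros)

lemma cont_det: "continuous_on UNIV (\<lambda>x::complex^'n^'n. det x)"
  unfolding det_def by (intro continuous_intros)

lemma mm_meas[measurable (raw)]:
  fixes F :: "'p \<Rightarrow> complex^'k^'m" and G :: "'p \<Rightarrow> complex^'n^'k"
  assumes "F \<in> borel_measurable M" "G \<in> borel_measurable M"
  shows "(\<lambda>p. F p ** G p) \<in> borel_measurable M"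
  by (rule borel_measurable_continuous_Pair[OF assms, of "(**)"]) (rule cont_mm)

lemma cs_meas[measurable (raw)]:
  fixes F :: "'p \<Rightarrow> complex^'n^'m"
  assumes "c \<in> borel_measurable M" "F \<in> borel_measurable M"
  shows "(\<lambda>p. csmult (c p) (F p)) \<in> borel_measurable M"
  by (rule borel_measurable_continuous_Pair[OF assms, of csmult]) (rule cont_cs)

lemma adj_meas[measurable (raw)]:
  fixes F :: "'p \<Rightarrow> complex^'n^'m"
  assumes "F \<in> borel_measurable M"
  shows "(\<lambda>p. cmat_adj (F p)) \<in> borel_measurable M"
  using borel_measurable_continuous_on[OF cont_adj assms] .

lemma cnj_meas[measurable (raw)]:
  fixes F :: "'p \<Rightarrow> complex^'n^'m"
  assumes "F \<in> borel_measurable M"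
  shows "(\<lambda>p. cmat_cnj (F p)) \<in> borel_measurable M"
  using borel_measurable_continuous_on[OF cont_cnj assms] .

lemma pmat_meas:
  assumes "\<And>i. f i \<in> borel_measurable M"
  shows "pmat f X \<in> borel_measurable M"
proof -
  have "(\<lambda>p. \<Sum>i\<in>UNIV. csmult (f i p) (cmat_of_real (X i))) \<in> borel_measurable M"
    by (intro borel_measurable_sum cs_meas assms borel_measurable_const)
  then show ?thesis unfolding pmat_def[abs_def] .
qed

lemma mat1_nz: "(mat 1 :: complex^'n^'n) \<noteq> 0"
proof
  assume "(mat 1 :: complex^'n^'n) = 0"
  then have "(mat 1 :: complex^'n^'n) $ undefined $ undefined = 0" by simp
  then show False by (simp add: mat_def)
qed

lemma inv_noninv:
  assumes "\<not> invertible (X::complex^'n^'n)"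
  shows "matrix_inv X = matrix_inv (0::complex^'n^'n)"
proof -
  have "(\<lambda>A'. X ** A' = mat 1 \<and> A' ** X = mat 1) = (\<lambda>A'. (0::complex^'n^'n) ** A' = mat 1 \<and> A' ** 0 = mat 1)"
  proof
    fix A' :: "complex^'n^'n"
    have "\<not> (X ** A' = mat 1 \<and> A' ** X = mat 1)" using assms invertible_def by blast
    moreover have "\<not> ((0::complex^'n^'n) ** A' = mat 1 \<and> A' ** 0 = mat 1)"
      using mat1_nz by (metis mm_zero_l)
    ultimately show "(X ** A' = mat 1 \<and> A' ** X = mat 1) = ((0::complex^'n^'n) ** A' = mat 1 \<and> A' ** 0 = mat 1)"
      by blast
  qed
  then show ?thesis unfolding matrix_inv_def by simp
qed

definition Nm :: "complex^'n^'n \<Rightarrow> complex^'n^'n" where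
  "Nm X = (\<chi> k j. det (\<chi> i l. if l = k then (mat 1 :: complex^'n^'n)$i$j else X$i$l))"

lemma inv_cramer:
  assumes d: "det (X::complex^'n^'n) \<noteq> 0"
  shows "matrix_inv X = csmult (inverse (det X)) (Nm X)"
proof -
  have inv: "invertible X" using d invertible_det_nz by blast
  have col: "matrix_inv X $ k $ j = det (\<chi> i l. if l = k then (mat 1 :: complex^'n^'n)$i$j else X$i$l) / det X" for k j
  proof -
    let ?x = "\<chi> k. matrix_inv X $ k $ j"
    let ?b = "\<chi> i. (mat 1 :: complex^'n^'n) $ i $ j"
    have "X *v ?x = (\<chi> i. (X ** matrix_inv X) $ i $ j)"
      by (simp add: matrix_vector_mult_def matrix_matrix_mult_def)
    also have "\<dots> = ?b" by (simp add: matrix_inv_props[OF inv])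
    finally have "?x = (\<chi> k. det(\<chi> i l. if l=k then ?b$i else X$i$l) / det X)"
      by (rule iffD1[OF cramer[OF d]])
    then have "?x $ k = det(\<chi> i l. if l=k then ?b$i else X$i$l) / det X" by simp
    then show ?thesis by (simp cong: if_cong)
  qed
  show ?thesis by (simp add: vec_eq_iff csmult_def Nm_def col divide_inverse mult.commute)
qed

lemma cont_Nm: "continuous_on UNIV (Nm :: complex^'n^'n \<Rightarrow> _)"
proof -
  have c1: "continuous_on UNIV (\<lambda>X::complex^'n^'n. \<chi> i l. if l = k then (mat 1 :: complex^'n^'n)$i$j else X$i$l)" for k j
  proof (intro continuous_on_vec_lambda)
    fix i l
    show "continuous_on UNIV (\<lambda>X::complex^'n^'n. if l = k then (mat 1 :: complex^'n^'n)$i$j else X$i$l)"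
      by (cases "l = k") (auto intro!: continuous_intros)
  qed
  show ?thesis unfolding Nm_def[abs_def]
    by (intro continuous_on_vec_lambda continuous_on_compose2[OF cont_det c1]) auto
qed

lemma inv_eq: "matrix_inv (X::complex^'n^'n) = (if det X = 0 then matrix_inv 0 else csmult (inverse (det X)) (Nm X))"
proof (cases "det X = 0")
  case True
  then have "\<not> invertible X" by (simp add: invertible_det_nz)
  then have "matrix_inv X = matrix_inv 0" by (rule inv_noninv)
  then show ?thesis using True by simp
next
  case False
  then show ?thesis using inv_cramer[of X] by simp
qed

lemma inv_borel: "(matrix_inv :: complex^'n^'n \<Rightarrow> _) \<in> borel_measurable borel"
proof -
  have detm: "(\<lambda>X::complex^'n^'n. det X) \<in> borel_measurable borel"
    by (rule borel_measurable_continuous_onI[OF cont_det])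
  have Nmm: "(Nm :: complex^'n^'n \<Rightarrow> _) \<in> borel_measurable borel"
    by (rule borel_measurable_continuous_onI[OF cont_Nm])
  have set: "{X \<in> space borel. det (X::complex^'n^'n) = 0} \<in> sets borel"
  proof -
    have "{X \<in> space borel. det (X::complex^'n^'n) = 0} = (\<lambda>X. det X) -` {0} \<inter> space borel" by (simp add: set_eq_iff)
    also have "\<dots> \<in> sets borel" by (rule measurable_sets[OF detm]) simp
    finally show ?thesis .
  qed
  have eq: "(matrix_inv :: complex^'n^'n \<Rightarrow> _) = (\<lambda>X. if det X = 0 then matrix_inv 0 else csmult (inverse (det X)) (Nm X))"
    by (rule ext) (rule inv_eq)
  have m2: "(\<lambda>X::complex^'n^'n. csmult (inverse (det X)) (Nm X)) \<in> borel_measurable borel"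
    by (rule cs_meas[OF borel_measurable_inverse[OF detm] Nmm])
  have "(\<lambda>X::complex^'n^'n. if det X = 0 then matrix_inv 0 else csmult (inverse (det X)) (Nm X)) \<in> borel_measurable borel"
    by (rule measurable_If[OF measurable_const m2 set]) simp
  then show ?thesis by (subst eq)
qed

lemma inv_meas[measurable (raw)]:
  fixes F :: "'p \<Rightarrow> complex^'n^'n"
  assumes "F \<in> borel_measurable M"
  shows "(\<lambda>p. matrix_inv (F p)) \<in> borel_measurable M"
  using measurable_compose[OF assms inv_borel] by (simp add: comp_def)

lemma pinv_meas:
  fixes A :: "'q::finite \<Rightarrow> real^'n^'n"
  assumes "\<And>i. alpha i \<in> borel_measurable M"
  shows "(\<lambda>p. matrix_inv (pmat alpha A p)) \<in> borel_measurable M"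
  using measurable_compose[OF pmat_meas[where f=alpha and X=A and M=M, OF assms] inv_borel] by (simp add: comp_def)

lemma xhat_meas:
  fixes A :: "'q::finite \<Rightarrow> real^'n^'n"
  assumes "\<And>i. alpha i \<in> borel_measurable M" "\<And>j. beta j \<in> borel_measurable M"
  shows "xhat alpha beta A B \<in> borel_measurable M"
  unfolding xhat_def[abs_def] by (intro mm_meas pinv_meas pmat_meas assms)

lemma yhat_meas:
  fixes A :: "'q::finite \<Rightarrow> real^'n^'n"
  assumes "\<And>i. alpha i \<in> borel_measurable M" "\<And>j. beta j \<in> borel_measurable M" "\<And>k. gamma k \<in> borel_measurable M"
  shows "yhat alpha beta gamma A B C \<in> borel_measurable M"
  unfolding yhat_def[abs_def] by (intro mm_meas xhat_meas pmat_meas assms)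

lemma xdual_meas:
  fixes A :: "'q::finite \<Rightarrow> real^'n^'n"
  assumes "\<And>i. alpha i \<in> borel_measurable M" "\<And>k. gamma k \<in> borel_measurable M"
  shows "xdual alpha gamma A C \<in> borel_measurable M"
  unfolding xdual_def[abs_def] by (intro mm_meas adj_meas pinv_meas pmat_meas assms)


lemma pw_bound:
  fixes E D Tk :: "'w::real_inner"
  assumes r: "norm (D - Tk) \<le> g * n^2" and t: "norm Tk \<le> g * n" and g: "0 \<le> g" and n: "0 \<le> n" "n \<le> 1"
  shows "\<bar>(norm (E - D))^2 - (norm E)^2 + 2 * inner E Tk\<bar> \<le> 5 * n^2 * ((norm E)^2 + g^2)"
    and "(norm (E - D))^2 \<le> 8 * ((norm E)^2 + g^2)"
proof -
  have nD: "norm D \<le> 2 * g * n"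
  proof -
    have "norm D \<le> norm (D - Tk) + norm Tk" by (metis norm_triangle_sub add.commute)
    also have "\<dots> \<le> g * n^2 + g * n" using r t by simp
    also have "g * n^2 \<le> g * n" using g n by (simp add: mult_left_mono power2_eq_square mult_left_le)
    finally show ?thesis by simp
  qed
  have nD2: "(norm D)^2 \<le> 4 * g^2 * n^2"
  proof -
    have "(norm D)^2 \<le> (2 * g * n)^2" using nD by (simp add: power_mono)
    then show ?thesis by (simp add: power_mult_distrib)
  qed
  have exp: "(norm (E - D))^2 = (norm E)^2 - 2 * inner E D + (norm D)^2"
    by (simp add: power2_norm_eq_inner inner_diff_left inner_diff_right inner_commute)
  have "\<bar>inner E (D - Tk)\<bar> \<le> norm E * norm (D - Tk)" by (rule Cauchy_Schwarz_ineq2)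
  also have "\<dots> \<le> norm E * (g * n^2)" by (intro mult_left_mono r) simp
  finally have i1: "\<bar>inner E (D - Tk)\<bar> \<le> norm E * g * n^2" by simp
  have amgm: "2 * (norm E * g) \<le> (norm E)^2 + g^2"
  proof -
    have "0 \<le> (norm E - g)^2" by simp
    then show ?thesis by (simp add: power2_diff)
  qed
  have eq: "(norm (E - D))^2 - (norm E)^2 + 2 * inner E Tk = - 2 * inner E (D - Tk) + (norm D)^2"
    by (simp add: exp inner_diff_right)
  have i1a: "inner E (D - Tk) \<le> norm E * g * n^2" "- inner E (D - Tk) \<le> norm E * g * n^2"
    using i1 by (auto simp: abs_le_iff)
  have nn: "0 \<le> (norm D)^2" by simp
  have "\<bar>(norm (E - D))^2 - (norm E)^2 + 2 * inner E Tk\<bar> \<le> 2 * (norm E * g * n^2) + 4 * g^2 * n^2"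
    unfolding eq abs_le_iff using i1a nD2 nn by linarith
  also have "\<dots> = n^2 * (2 * (norm E * g)) + 4 * g^2 * n^2" by (simp add: algebra_simps)
  also have "\<dots> \<le> n^2 * ((norm E)^2 + g^2) + 4 * n^2 * ((norm E)^2 + g^2)"
    by (intro add_mono mult_left_mono amgm) (auto simp: algebra_simps)
  finally show "\<bar>(norm (E - D))^2 - (norm E)^2 + 2 * inner E Tk\<bar> \<le> 5 * n^2 * ((norm E)^2 + g^2)"
    by (simp add: algebra_simps)
  have "(norm (E - D))^2 \<le> (norm E + norm D)^2" by (intro power_mono norm_triangle_ineq4) simp
  also have "\<dots> \<le> 2 * (norm E)^2 + 2 * (norm D)^2"
  proof -
    have "0 \<le> (norm E - norm D)^2" by simp
    then show ?thesis by (simp add: power2_diff power2_sum)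
  qed
  also have "\<dots> \<le> 2 * (norm E)^2 + 2 * (4 * g^2)"
  proof -
    have "n^2 \<le> 1" using n by (simp add: power_le_one)
    then have "4 * g^2 * n^2 \<le> 4 * g^2" by (simp add: mult_left_le)
    then show ?thesis using nD2 by simp
  qed
  also have "\<dots> \<le> 8 * ((norm E)^2 + g^2)" by simp
  finally show "(norm (E - D))^2 \<le> 8 * ((norm E)^2 + g^2)" .
qed

lemma abs_int_le:
  fixes f g :: "'a \<Rightarrow> real"
  assumes "integrable M f" "integrable M g" "AE x in M. \<bar>f x\<bar> \<le> g x"
  shows "\<bar>\<integral>x. f x \<partial>M\<bar> \<le> (\<integral>x. g x \<partial>M)"
proof -
  have "\<bar>\<integral>x. f x \<partial>M\<bar> \<le> (\<integral>x. \<bar>f x\<bar> \<partial>M)" using integral_norm_bound[of M f] by simp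
  also have "\<dots> \<le> (\<integral>x. g x \<partial>M)" using assms by (intro integral_mono_AE) auto
  finally show ?thesis .
qed

lemma core_deriv:
  fixes M :: "'p measure" and Y :: "'v::real_normed_vector \<Rightarrow> 'p \<Rightarrow> 'w::euclidean_space"
    and y :: "'p \<Rightarrow> 'w" and T :: "'p \<Rightarrow> 'v \<Rightarrow> 'w" and g :: "'p \<Rightarrow> real"
  assumes Ym: "\<And>H. Y H \<in> borel_measurable M" and ym: "y \<in> borel_measurable M"
    and EL2: "integrable M (\<lambda>p. (norm (y p - Y H0 p))^2)"
    and gm: "g \<in> borel_measurable M" and gL2: "integrable M (\<lambda>p. (g p)^2)" and gpos: "\<And>p. 0 \<le> g p"
    and Tm: "\<And>K. (\<lambda>p. T p K) \<in> borel_measurable M"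
    and Tlin: "\<And>p. linear (T p)"
    and Tbd: "AE p in M. \<forall>K. norm (T p K) \<le> g p * norm K"
    and dpos: "d > 0"
    and Rbd: "AE p in M. \<forall>H. norm (H - H0) < d \<longrightarrow>
                 norm (Y H p - Y H0 p - T p (H - H0)) \<le> g p * (norm (H - H0))^2"
  shows "((\<lambda>H. \<integral>p. (norm (y p - Y H p))^2 \<partial>M) has_derivative
           (\<lambda>K. -2 * (\<integral>p. inner (y p - Y H0 p) (T p K) \<partial>M))) (at H0)"
proof -
  define E where "E p = y p - Y H0 p" for p
  define h where "h p = (norm (E p))^2 + (g p)^2" for p
  have Em[measurable]: "E \<in> borel_measurable M" unfolding E_def by (intro borel_measurable_diff ym Ym)
  have gm'[measurable]: "g \<in> borel_measurable M" by (rule gm)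
  have Tm'[measurable]: "(\<lambda>p. T p K) \<in> borel_measurable M" for K by (rule Tm)
  have hi: "integrable M h" unfolding h_def using EL2 gL2 E_def by simp
  have hpos: "0 \<le> h p" for p unfolding h_def by simp
  have inner_bd: "\<bar>inner (E p) (T p K)\<bar> \<le> norm K * h p"
    if "\<forall>K. norm (T p K) \<le> g p * norm K" for p K
  proof -
    have "\<bar>inner (E p) (T p K)\<bar> \<le> norm (E p) * norm (T p K)" by (rule Cauchy_Schwarz_ineq2)
    also have "\<dots> \<le> norm (E p) * (g p * norm K)" using that by (intro mult_left_mono) auto
    also have "\<dots> = norm K * (norm (E p) * g p)" by simp
    also have "\<dots> \<le> norm K * h p"
    proof (intro mult_left_mono)
      have "0 \<le> (norm (E p) - g p)^2" by simp
      then show "norm (E p) * g p \<le> h p" unfolding h_def power2_diff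
        using mult_nonneg_nonneg[OF norm_ge_zero[of "E p"] gpos[of p]] zero_le_power2[of "norm (E p)"] zero_le_power2[of "g p"]
        by linarith
    qed simp
    finally show ?thesis .
  qed
  have int_inner: "integrable M (\<lambda>p. inner (E p) (T p K))" for K
  proof (rule Bochner_Integration.integrable_bound[where f="\<lambda>p. norm K * h p"])
    show "integrable M (\<lambda>p. norm K * h p)" using hi by simp
    show "(\<lambda>p. inner (E p) (T p K)) \<in> borel_measurable M" by (intro borel_measurable_inner Em Tm)
    show "AE p in M. norm (inner (E p) (T p K)) \<le> norm (norm K * h p)"
      using Tbd by eventually_elim (use inner_bd hpos in auto)
  qed
  define L where "L K = -2 * (\<integral>p. inner (E p) (T p K) \<partial>M)" for K
  have bl: "bounded_linear L"
  proof (rule bounded_linear_intro[where K="2 * (\<integral>p. h p \<partial>M)"])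
    fix a b
    have "L (a + b) = -2 * (\<integral>p. inner (E p) (T p a) + inner (E p) (T p b) \<partial>M)"
      unfolding L_def by (simp add: linear_add[OF Tlin] inner_add_right)
    also have "\<dots> = L a + L b" unfolding L_def using int_inner by simp
    finally show "L (a + b) = L a + L b" .
  next
    fix r a
    show "L (r *\<^sub>R a) = r *\<^sub>R L a"
      unfolding L_def by (simp add: linear_scale[OF Tlin])
  next
    fix K
    have "norm (L K) = 2 * \<bar>\<integral>p. inner (E p) (T p K) \<partial>M\<bar>" unfolding L_def by simp
    also have "\<dots> \<le> 2 * (\<integral>p. norm K * h p \<partial>M)"
    proof -
      have "\<bar>\<integral>p. inner (E p) (T p K) \<partial>M\<bar> \<le> (\<integral>p. norm K * h p \<partial>M)"
        using Tbd hi inner_bd by (intro abs_int_le int_inner) (auto elim!: eventually_mono)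
      then show ?thesis by simp
    qed
    also have "\<dots> = norm K * (2 * (\<integral>p. h p \<partial>M))" by simp
    finally show "norm (L K) \<le> norm K * (2 * (\<integral>p. h p \<partial>M))" .
  qed
  define J where "J H = (\<integral>p. (norm (y p - Y H p))^2 \<partial>M)" for H
  have key: "\<bar>J (H0 + k) - J H0 - L k\<bar> \<le> 5 * (norm k)^2 * (\<integral>p. h p \<partial>M)"
    if k: "norm k < d" "norm k \<le> 1" for k
  proof -
    define D where "D p = Y (H0 + k) p - Y H0 p" for p
    have Dm[measurable]: "D \<in> borel_measurable M" unfolding D_def by (intro borel_measurable_diff Ym)
    have ae: "AE p in M. norm (D p - T p k) \<le> g p * (norm k)^2 \<and> norm (T p k) \<le> g p * norm k"
      using Rbd Tbd
    proof eventually_elim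
      case (elim p)
      from elim(1) have "norm ((H0 + k) - H0) < d \<longrightarrow>
                 norm (Y (H0 + k) p - Y H0 p - T p ((H0 + k) - H0)) \<le> g p * (norm ((H0 + k) - H0))^2"
        by (rule spec)
      then show ?case using elim(2) k by (simp add: D_def)
    qed
    have yY: "y p - Y (H0 + k) p = E p - D p" for p unfolding E_def D_def by simp
    have int1: "integrable M (\<lambda>p. (norm (E p - D p))^2)"
    proof (rule Bochner_Integration.integrable_bound[where f="\<lambda>p. 8 * h p"])
      show "integrable M (\<lambda>p. 8 * h p)" using hi by simp
      show "(\<lambda>p. (norm (E p - D p))^2) \<in> borel_measurable M" by (intro borel_measurable_power measurable_compose[OF _ borel_measurable_norm]) (rule borel_measurable_diff[OF Em Dm])
      show "AE p in M. norm ((norm (E p - D p))^2) \<le> norm (8 * h p)"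
        using ae
      proof eventually_elim
        case (elim p)
        have "(norm (E p - D p))^2 \<le> 8 * ((norm (E p))^2 + (g p)^2)"
          by (rule pw_bound(2)[where Tk="T p k" and n="norm k"]) (use elim gpos k in auto)
        then show ?case by (simp add: h_def)
      qed
    qed
    have int0: "integrable M (\<lambda>p. (norm (E p))^2)" using EL2 E_def by simp
    have "J (H0 + k) - J H0 - L k
        = (\<integral>p. (norm (E p - D p))^2 - (norm (E p))^2 + 2 * inner (E p) (T p k) \<partial>M)"
      unfolding J_def L_def yY using int1 int0 int_inner[of k]
      by (simp add: E_def[symmetric])
    also have "\<bar>\<dots>\<bar> \<le> (\<integral>p. 5 * (norm k)^2 * h p \<partial>M)"
    proof (rule abs_int_le)
      show "integrable M (\<lambda>p. (norm (E p - D p))^2 - (norm (E p))^2 + 2 * inner (E p) (T p k))"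
        using int1 int0 int_inner[of k] by simp
      show "integrable M (\<lambda>p. 5 * (norm k)^2 * h p)" using hi by simp
      show "AE p in M. \<bar>(norm (E p - D p))^2 - (norm (E p))^2 + 2 * inner (E p) (T p k)\<bar> \<le> 5 * (norm k)^2 * h p"
        using ae
      proof eventually_elim
        case (elim p)
        have "\<bar>(norm (E p - D p))^2 - (norm (E p))^2 + 2 * inner (E p) (T p k)\<bar> \<le> 5 * (norm k)^2 * ((norm (E p))^2 + (g p)^2)"
          by (rule pw_bound(1)) (use elim gpos k in auto)
        then show ?case by (simp add: h_def)
      qed
    qed
    also have "\<dots> = 5 * (norm k)^2 * (\<integral>p. h p \<partial>M)" by simp
    finally show ?thesis .
  qed
  have lim: "(\<lambda>k. norm (J (H0 + k) - J H0 - L k) / norm k) \<midarrow>0\<rightarrow> 0"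
  proof (rule Lim_null_comparison)
    show "\<forall>\<^sub>F k in at 0. norm (norm (J (H0 + k) - J H0 - L k) / norm k) \<le> 5 * norm k * (\<integral>p. h p \<partial>M)"
    proof -
      have b: "norm (norm (J (H0 + k) - J H0 - L k) / norm k) \<le> 5 * norm k * (\<integral>p. h p \<partial>M)"
        if k: "norm k < d" "norm k \<le> 1" "norm k > 0" for k
      proof -
        have "norm (norm (J (H0 + k) - J H0 - L k) / norm k) = \<bar>J (H0 + k) - J H0 - L k\<bar> / norm k" by simp
        also have "\<dots> \<le> 5 * (norm k)^2 * (\<integral>p. h p \<partial>M) / norm k"
          using key[OF k(1,2)] k(3) by (simp add: divide_right_mono)
        also have "\<dots> = 5 * norm k * (\<integral>p. h p \<partial>M)" using k(3) by (simp add: power2_eq_square)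
        finally show ?thesis .
      qed
      show ?thesis unfolding eventually_at
        by (rule exI[of _ "min d 1"]) (use dpos b in auto)
    qed
    show "((\<lambda>k. 5 * norm k * (\<integral>p. h p \<partial>M)) \<longlongrightarrow> 0) (at 0)"
      by (auto intro!: tendsto_eq_intros)
  qed
  have "(J has_derivative L) (at H0)" unfolding has_derivative_at using bl lim by simp
  then show ?thesis unfolding J_def L_def E_def .
qed



locale setting =
  fixes \<mu> :: "(complex^'np) measure"
    and y :: "complex^'np \<Rightarrow> complex^'nf^'no"
    and alpha :: "'qa::finite \<Rightarrow> complex^'np \<Rightarrow> complex"
    and beta :: "'qb::finite \<Rightarrow> complex^'np \<Rightarrow> complex"
    and gamma :: "'qc::finite \<Rightarrow> complex^'np \<Rightarrow> complex"
    and A :: "'qa \<Rightarrow> real^'r^'r"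
    and B :: "'qb \<Rightarrow> real^'nf^'r"
    and C :: "'qc \<Rightarrow> real^'r^'no"
  assumes P_cnj: "\<forall>p\<in>space \<mu>. cvec_cnj p \<in> space \<mu>"
    and S_cnj: "\<forall>S\<in>sets \<mu>. cvec_cnj ` S \<in> sets \<mu>"
    and mu_cnj: "\<forall>S\<in>sets \<mu>. emeasure \<mu> (cvec_cnj ` S) = emeasure \<mu> S"
    and y_meas: "y \<in> borel_measurable \<mu>"
    and y_L2: "(\<integral>\<^sup>+ p. ennreal ((norm (y p))\<^sup>2) \<partial>\<mu>) < \<infinity>"
    and y_cnj: "\<forall>p\<in>space \<mu>. cmat_cnj (y p) = y (cvec_cnj p)"
    and alpha_meas: "\<forall>i. alpha i \<in> borel_measurable \<mu>"
    and beta_meas: "\<forall>j. beta j \<in> borel_measurable \<mu>"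
    and gamma_meas: "\<forall>k. gamma k \<in> borel_measurable \<mu>"
    and alpha_cnj: "\<forall>i. \<forall>p\<in>space \<mu>. alpha i (cvec_cnj p) = cnj (alpha i p)"
    and beta_cnj: "\<forall>j. \<forall>p\<in>space \<mu>. beta j (cvec_cnj p) = cnj (beta j p)"
    and gamma_cnj: "\<forall>k. \<forall>p\<in>space \<mu>. gamma k (cvec_cnj p) = cnj (gamma k p)"
    and ratio_L2: "(\<integral>\<^sup>+ p. (ennreal ((\<Sum>j\<in>UNIV. cmod (beta j p)) * (\<Sum>k\<in>UNIV. cmod (gamma k p)))
                        / ennreal (\<Sum>i\<in>UNIV. cmod (alpha i p)))\<^sup>2 \<partial>\<mu>) < \<infinity>"
    and adm: "admissible \<mu> alpha A"
begin

lemma am[measurable]: "alpha i \<in> borel_measurable \<mu>" using alpha_meas by blast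
lemma bm[measurable]: "beta j \<in> borel_measurable \<mu>" using beta_meas by blast
lemma gm[measurable]: "gamma k \<in> borel_measurable \<mu>" using gamma_meas by blast
lemma ym[measurable]: "y \<in> borel_measurable \<mu>" using y_meas .

lemma cnj_measurable: "cvec_cnj \<in> measurable \<mu> \<mu>"
proof (rule measurableI)
  fix x assume "x \<in> space \<mu>" then show "cvec_cnj x \<in> space \<mu>" using P_cnj by blast
next
  fix S assume S: "S \<in> sets \<mu>"
  have "cvec_cnj -` S \<inter> space \<mu> = cvec_cnj ` S"
  proof (intro equalityI subsetI)
    fix x assume "x \<in> cvec_cnj -` S \<inter> space \<mu>"
    then have "cvec_cnj x \<in> S" by simp
    then show "x \<in> cvec_cnj ` S" by (metis cvec_cnj_cnj image_eqI)
  next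
    fix x assume "x \<in> cvec_cnj ` S"
    then obtain z where z: "z \<in> S" "x = cvec_cnj z" by blast
    have "z \<in> space \<mu>" using z(1) S sets.sets_into_space by blast
    then show "x \<in> cvec_cnj -` S \<inter> space \<mu>" using z P_cnj by auto
  qed
  then show "cvec_cnj -` S \<inter> space \<mu> \<in> sets \<mu>" using S S_cnj by simp
qed

lemma distr_cnj: "distr \<mu> \<mu> cvec_cnj = \<mu>"
proof (rule measure_eqI)
  show "sets (distr \<mu> \<mu> cvec_cnj) = sets \<mu>" by simp
next
  fix S assume "S \<in> sets (distr \<mu> \<mu> cvec_cnj)"
  then have S: "S \<in> sets \<mu>" by simp
  have "cvec_cnj -` S \<inter> space \<mu> = cvec_cnj ` S"
  proof (intro equalityI subsetI)
    fix x assume "x \<in> cvec_cnj -` S \<inter> space \<mu>"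
    then have "cvec_cnj x \<in> S" by simp
    then show "x \<in> cvec_cnj ` S" by (metis cvec_cnj_cnj image_eqI)
  next
    fix x assume "x \<in> cvec_cnj ` S"
    then obtain z where z: "z \<in> S" "x = cvec_cnj z" by blast
    have "z \<in> space \<mu>" using z(1) S sets.sets_into_space by blast
    then show "x \<in> cvec_cnj -` S \<inter> space \<mu>" using z P_cnj by auto
  qed
  then show "emeasure (distr \<mu> \<mu> cvec_cnj) S = emeasure \<mu> S"
    using S mu_cnj by (simp add: emeasure_distr[OF cnj_measurable S])
qed

lemma integral_cnj_invariant:
  fixes f :: "complex^'np \<Rightarrow> 'b::{banach, second_countable_topology}"
  assumes "f \<in> borel_measurable \<mu>"
  shows "(\<integral>p. f (cvec_cnj p) \<partial>\<mu>) = (\<integral>p. f p \<partial>\<mu>)"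
  using integral_distr[OF cnj_measurable assms] distr_cnj by simp

definition sa where "sa p = (\<Sum>i\<in>UNIV. cmod (alpha i p))"
definition sb where "sb p = (\<Sum>j\<in>UNIV. cmod (beta j p))"
definition sc where "sc p = (\<Sum>k\<in>UNIV. cmod (gamma k p))"
definition rr where "rr p = sb p * sc p / sa p"

lemma rr_nonneg: "0 \<le> rr p" unfolding rr_def sa_def sb_def sc_def by (simp add: sum_nonneg)

lemma rr_meas[measurable]: "rr \<in> borel_measurable \<mu>"
  unfolding rr_def[abs_def] sa_def[abs_def] sb_def[abs_def] sc_def[abs_def] by measurable

definition Mi where "Mi i = (SOME c. 0 \<le> c \<and> (AE p in \<mu>. norm (csmult (alpha i p) (matrix_inv (pmat alpha A p))) \<le> c))"

lemma Mi: "0 \<le> Mi i" "AE p in \<mu>. norm (csmult (alpha i p) (matrix_inv (pmat alpha A p))) \<le> Mi i"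
proof -
  let ?f = "\<lambda>p. ereal (norm (csmult (alpha i p) (matrix_inv (pmat alpha A p))))"
  have lt: "esssup \<mu> ?f < \<infinity>" using adm unfolding admissible_def by blast
  obtain c where c: "esssup \<mu> ?f \<le> ereal c" "0 \<le> c"
  proof (cases "esssup \<mu> ?f")
    case (real r) then show ?thesis using that[of "max r 0"] by simp
  next
    case PInf then show ?thesis using lt by simp
  next
    case MInf then show ?thesis using that[of 0] by simp
  qed
  have "AE p in \<mu>. ?f p \<le> ereal c" using esssup_AE[of ?f \<mu>]
    by eventually_elim (use c(1) in \<open>blast intro: order.trans\<close>)
  then have "AE p in \<mu>. norm (csmult (alpha i p) (matrix_inv (pmat alpha A p))) \<le> c" by simp
  then have "\<exists>c. 0 \<le> c \<and> (AE p in \<mu>. norm (csmult (alpha i p) (matrix_inv (pmat alpha A p))) \<le> c)"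
    using c(2) by blast
  then have "0 \<le> Mi i \<and> (AE p in \<mu>. norm (csmult (alpha i p) (matrix_inv (pmat alpha A p))) \<le> Mi i)"
    unfolding Mi_def by (rule someI_ex)
  then show "0 \<le> Mi i" "AE p in \<mu>. norm (csmult (alpha i p) (matrix_inv (pmat alpha A p))) \<le> Mi i" by auto
qed

definition good where "good p \<longleftrightarrow> p \<in> space \<mu> \<and> invertible (pmat alpha A p) \<and>
   (\<forall>i. norm (csmult (alpha i p) (matrix_inv (pmat alpha A p))) \<le> Mi i)"

lemma AE_good: "AE p in \<mu>. good p"
proof -
  have "AE p in \<mu>. \<forall>i. norm (csmult (alpha i p) (matrix_inv (pmat alpha A p))) \<le> Mi i"
    using Mi(2) by (simp add: AE_all_countable)
  moreover have "AE p in \<mu>. invertible (pmat alpha A p)" using adm unfolding admissible_def by blast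
  ultimately show ?thesis unfolding good_def by (auto elim: eventually_mono intro: AE_I2)
qed

end


context setting begin

abbreviation "Ap p \<equiv> pmat alpha A p"
abbreviation "Bp p \<equiv> pmat beta B p"
abbreviation "Cp p \<equiv> pmat gamma C p"
abbreviation "Ai p \<equiv> matrix_inv (pmat alpha A p)"
definition "MA = (\<Sum>i\<in>UNIV. Mi i)"
definition "nB = (\<Sum>j\<in>UNIV. norm (B j))"
definition "nC = (\<Sum>k\<in>UNIV. norm (C k))"

lemma MA_nonneg: "0 \<le> MA" unfolding MA_def using Mi(1) by (simp add: sum_nonneg)
lemma nB_nonneg: "0 \<le> nB" unfolding nB_def by (simp add: sum_nonneg)
lemma nC_nonneg: "0 \<le> nC" unfolding nC_def by (simp add: sum_nonneg)
lemma sa_nonneg: "0 \<le> sa p" unfolding sa_def by (simp add: sum_nonneg)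
lemma sb_nonneg: "0 \<le> sb p" unfolding sb_def by (simp add: sum_nonneg)
lemma sc_nonneg: "0 \<le> sc p" unfolding sc_def by (simp add: sum_nonneg)

lemma good_space: "good p \<Longrightarrow> p \<in> space \<mu>" unfolding good_def by blast
lemma good_inv: "good p \<Longrightarrow> invertible (Ap p)" unfolding good_def by blast
lemma good_Mi: "good p \<Longrightarrow> cmod (alpha i p) * norm (Ai p) \<le> Mi i"
  unfolding good_def by (metis norm_csmult)

lemma not_inv_zero: "\<not> invertible (0::complex^'n^'n)"
  unfolding invertible_def using mat1_nz by (metis mm_zero_l)

lemma sa_pos: assumes "good p" shows "0 < sa p"
proof (rule ccontr)
  assume "\<not> 0 < sa p"
  then have "sa p = 0" using sa_nonneg[of p] by simp
  then have "\<forall>i\<in>UNIV. cmod (alpha i p) = 0" unfolding sa_def by (subst sum_nonneg_eq_0_iff[symmetric]) auto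
  then have "Ap p = 0" unfolding pmat_def by simp
  then have "invertible (0::complex^'r^'r)" using good_inv[OF assms] by simp
  then show False using not_inv_zero by blast
qed

lemma Ai_bd: assumes "good p" shows "norm (Ai p) * sa p \<le> MA"
proof -
  have "norm (Ai p) * sa p = (\<Sum>i\<in>UNIV. cmod (alpha i p) * norm (Ai p))"
    unfolding sa_def by (simp add: sum_distrib_left mult.commute)
  also have "\<dots> \<le> MA" unfolding MA_def by (intro sum_mono good_Mi assms)
  finally show ?thesis .
qed

lemma B_bd: "norm (Bp p) \<le> sb p * nB" unfolding sb_def nB_def by (rule norm_pmat)
lemma C_bd: "norm (Cp p) \<le> sc p * nC" unfolding sc_def nC_def by (rule norm_pmat)

lemma rr_eq: assumes "good p" shows "sb p * sc p * norm (Ai p) = rr p * (norm (Ai p) * sa p)"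
  using sa_pos[OF assms] unfolding rr_def by (simp add: field_simps)

lemma Q_bd: assumes "good p" shows "norm (Cp p) * norm (Ai p) * norm (Bp p) \<le> nC * nB * MA * rr p"
proof -
  have "norm (Cp p) * norm (Ai p) * norm (Bp p) \<le> (sc p * nC) * norm (Ai p) * (sb p * nB)"
    by (intro mult_mono C_bd B_bd mult_nonneg_nonneg) (auto simp: sc_nonneg nC_nonneg)
  also have "\<dots> = nC * nB * (sb p * sc p * norm (Ai p))" by (simp add: algebra_simps)
  also have "\<dots> = nC * nB * (rr p * (norm (Ai p) * sa p))" by (simp add: rr_eq[OF assms])
  also have "\<dots> \<le> nC * nB * (rr p * MA)"
    by (intro mult_left_mono Ai_bd assms rr_nonneg mult_nonneg_nonneg nC_nonneg nB_nonneg)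
  finally show ?thesis by (simp add: algebra_simps)
qed

lemma QB_bd: assumes "good p" shows "norm (Cp p) * norm (Ai p) * sb p \<le> nC * MA * rr p"
proof -
  have "norm (Cp p) * norm (Ai p) * sb p \<le> (sc p * nC) * norm (Ai p) * sb p"
    by (intro mult_right_mono C_bd) (auto simp: sb_nonneg)
  also have "\<dots> = nC * (sb p * sc p * norm (Ai p))" by (simp add: algebra_simps)
  also have "\<dots> = nC * (rr p * (norm (Ai p) * sa p))" by (simp add: rr_eq[OF assms])
  also have "\<dots> \<le> nC * (rr p * MA)"
    by (intro mult_left_mono Ai_bd assms rr_nonneg mult_nonneg_nonneg nC_nonneg)
  finally show ?thesis by (simp add: algebra_simps)
qed

lemma QC_bd: assumes "good p" shows "sc p * norm (Ai p) * norm (Bp p) \<le> nB * MA * rr p"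
proof -
  have "sc p * norm (Ai p) * norm (Bp p) \<le> sc p * norm (Ai p) * (sb p * nB)"
    by (intro mult_left_mono B_bd mult_nonneg_nonneg sc_nonneg) auto
  also have "\<dots> = nB * (sb p * sc p * norm (Ai p))" by (simp add: algebra_simps)
  also have "\<dots> = nB * (rr p * (norm (Ai p) * sa p))" by (simp add: rr_eq[OF assms])
  also have "\<dots> \<le> nB * (rr p * MA)"
    by (intro mult_left_mono Ai_bd assms rr_nonneg mult_nonneg_nonneg nB_nonneg)
  finally show ?thesis by (simp add: algebra_simps)
qed

lemma rr_L2: "integrable \<mu> (\<lambda>p. (rr p)^2)"
proof (rule integrableI_bounded)
  show "(\<lambda>p. (rr p)^2) \<in> borel_measurable \<mu>" by measurable
  have "AE p in \<mu>. ennreal (norm ((rr p)^2)) = (ennreal (sb p * sc p) / ennreal (sa p))^2"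
    using AE_good
  proof eventually_elim
    case (elim p)
    have "ennreal (sb p * sc p) / ennreal (sa p) = ennreal (rr p)"
      unfolding rr_def using sa_pos[OF elim] sb_nonneg sc_nonneg by (simp add: divide_ennreal)
    then show ?case by (simp add: ennreal_power rr_nonneg)
  qed
  then have "(\<integral>\<^sup>+ p. ennreal (norm ((rr p)^2)) \<partial>\<mu>) = (\<integral>\<^sup>+ p. (ennreal (sb p * sc p) / ennreal (sa p))^2 \<partial>\<mu>)"
    by (rule nn_integral_cong_AE)
  also have "\<dots> < \<infinity>" using ratio_L2 unfolding sa_def sb_def sc_def .
  finally show "(\<integral>\<^sup>+ p. ennreal (norm ((rr p)^2)) \<partial>\<mu>) < \<infinity>" .
qed

lemma y_L2': "integrable \<mu> (\<lambda>p. (norm (y p))^2)"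
proof (rule integrableI_bounded)
  show "(\<lambda>p. (norm (y p))^2) \<in> borel_measurable \<mu>" by measurable
  show "(\<integral>\<^sup>+ p. ennreal (norm ((norm (y p))^2)) \<partial>\<mu>) < \<infinity>" using y_L2 by simp
qed

lemma yhat_bd: assumes "good p" shows "norm (yhat alpha beta gamma A B C p) \<le> nC * nB * MA * rr p"
proof -
  have "norm (yhat alpha beta gamma A B C p) \<le> norm (Cp p) * (norm (Ai p) * norm (Bp p))"
    unfolding yhat_def xhat_def
    by (rule order.trans[OF norm_mm]) (intro mult_left_mono norm_mm norm_ge_zero)
  then show ?thesis using Q_bd[OF assms] by (simp add: mult.assoc)
qed

lemma yhat_m[measurable]: "yhat alpha beta gamma A B C \<in> borel_measurable \<mu>"
  by (rule yhat_meas) (auto simp: alpha_meas beta_meas gamma_meas)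

lemma E_L2: "integrable \<mu> (\<lambda>p. (norm (y p - yhat alpha beta gamma A B C p))^2)"
proof (rule Bochner_Integration.integrable_bound[where f="\<lambda>p. 2 * (norm (y p))^2 + 2 * (nC * nB * MA)^2 * (rr p)^2"])
  show "integrable \<mu> (\<lambda>p. 2 * (norm (y p))^2 + 2 * (nC * nB * MA)^2 * (rr p)^2)"
    using y_L2' rr_L2 by simp
  show "(\<lambda>p. (norm (y p - yhat alpha beta gamma A B C p))^2) \<in> borel_measurable \<mu>" by measurable
  show "AE p in \<mu>. norm ((norm (y p - yhat alpha beta gamma A B C p))^2) \<le> norm (2 * (norm (y p))^2 + 2 * (nC * nB * MA)^2 * (rr p)^2)"
    using AE_good
  proof eventually_elim
    case (elim p)
    let ?a = "norm (y p)" and ?b = "norm (yhat alpha beta gamma A B C p)"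
    have b: "?b \<le> nC * nB * MA * rr p" by (rule yhat_bd[OF elim])
    have b2: "?b^2 \<le> (nC * nB * MA)^2 * (rr p)^2"
      using power_mono[OF b norm_ge_zero, of 2] by (simp add: power_mult_distrib)
    have "(norm (y p - yhat alpha beta gamma A B C p))^2 \<le> (?a + ?b)^2"
      by (intro power_mono norm_triangle_ineq4) simp
    also have "\<dots> \<le> 2 * ?a^2 + 2 * ?b^2"
    proof -
      have "0 \<le> (?a - ?b)^2" by simp
      then show ?thesis by (simp add: power2_diff power2_sum)
    qed
    also have "\<dots> \<le> 2 * ?a^2 + 2 * ((nC * nB * MA)^2 * (rr p)^2)" using b2 by simp
    finally show ?case by simp
  qed
qed

end


lemma inner_cmat: "inner (X::complex^'n^'m) Y = Re (\<Sum>a\<in>UNIV. \<Sum>b\<in>UNIV. cnj (X$a$b) * Y$a$b)"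
  by (simp add: inner_vec_def inner_complex_def Re_sum)

lemma ctr_left: "(\<Sum>a\<in>UNIV. \<Sum>b\<in>UNIV. cnj (X$a$b) * (U ** Y)$a$b) =
   (\<Sum>c\<in>UNIV. \<Sum>b\<in>UNIV. cnj ((cmat_adj U ** X)$c$b) * (Y::complex^'n^'k)$c$b)"
proof -
  have "(\<Sum>a\<in>UNIV. \<Sum>b\<in>UNIV. cnj (X$a$b) * (U ** Y)$a$b) = (\<Sum>a\<in>UNIV. \<Sum>b\<in>UNIV. \<Sum>c\<in>UNIV. cnj (X$a$b) * (U$a$c * Y$c$b))"
    by (simp add: matrix_matrix_mult_def sum_distrib_left)
  also have "\<dots> = (\<Sum>a\<in>UNIV. \<Sum>c\<in>UNIV. \<Sum>b\<in>UNIV. cnj (X$a$b) * (U$a$c * Y$c$b))"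
    by (rule sum.cong[OF refl], rule sum.swap)
  also have "\<dots> = (\<Sum>c\<in>UNIV. \<Sum>a\<in>UNIV. \<Sum>b\<in>UNIV. cnj (X$a$b) * (U$a$c * Y$c$b))"
    by (rule sum.swap)
  also have "\<dots> = (\<Sum>c\<in>UNIV. \<Sum>b\<in>UNIV. \<Sum>a\<in>UNIV. cnj (X$a$b) * (U$a$c * Y$c$b))"
    by (rule sum.cong[OF refl], rule sum.swap)
  also have "\<dots> = (\<Sum>c\<in>UNIV. \<Sum>b\<in>UNIV. cnj ((cmat_adj U ** X)$c$b) * Y$c$b)"
    by (simp add: matrix_matrix_mult_def cmat_adj_def sum_distrib_left sum_distrib_right ac_simps)
  finally show ?thesis .
qed

lemma ctr_right: "(\<Sum>a\<in>UNIV. \<Sum>b\<in>UNIV. cnj (X$a$b) * (Y ** V)$a$b) =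
   (\<Sum>a\<in>UNIV. \<Sum>c\<in>UNIV. cnj ((X ** cmat_adj V)$a$c) * (Y::complex^'k^'m)$a$c)"
proof -
  have "(\<Sum>a\<in>UNIV. \<Sum>b\<in>UNIV. cnj (X$a$b) * (Y ** V)$a$b) = (\<Sum>a\<in>UNIV. \<Sum>b\<in>UNIV. \<Sum>c\<in>UNIV. cnj (X$a$b) * (Y$a$c * V$c$b))"
    by (simp add: matrix_matrix_mult_def sum_distrib_left)
  also have "\<dots> = (\<Sum>a\<in>UNIV. \<Sum>c\<in>UNIV. \<Sum>b\<in>UNIV. cnj (X$a$b) * (Y$a$c * V$c$b))"
    by (rule sum.cong[OF refl], rule sum.swap)
  also have "\<dots> = (\<Sum>a\<in>UNIV. \<Sum>c\<in>UNIV. cnj ((X ** cmat_adj V)$a$c) * Y$a$c)"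
    by (simp add: matrix_matrix_mult_def cmat_adj_def sum_distrib_left sum_distrib_right ac_simps)
  finally show ?thesis .
qed

definition phi :: "real^'n^'m \<Rightarrow> complex^'n^'m \<Rightarrow> real" where
  "phi K X = (\<Sum>a\<in>UNIV. \<Sum>b\<in>UNIV. Re (X$a$b) * K$a$b)"

lemma tr_id:
  fixes U :: "complex^'r^'no" and E :: "complex^'nf^'no" and V :: "complex^'nf^'c" and K :: "real^'c^'r"
  shows "phi K (cmat_adj U ** E ** cmat_adj V) = inner E (U ** cmat_of_real K ** V)"
proof -
  have "inner E (U ** cmat_of_real K ** V) = Re (\<Sum>a\<in>UNIV. \<Sum>b\<in>UNIV. cnj (E$a$b) * ((U ** cmat_of_real K) ** V)$a$b)"
    by (rule inner_cmat)
  also have "\<dots> = Re (\<Sum>a\<in>UNIV. \<Sum>c\<in>UNIV. cnj ((E ** cmat_adj V)$a$c) * (U ** cmat_of_real K)$a$c)"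
    by (simp only: ctr_right)
  also have "\<dots> = Re (\<Sum>d\<in>UNIV. \<Sum>c\<in>UNIV. cnj ((cmat_adj U ** (E ** cmat_adj V))$d$c) * (cmat_of_real K)$d$c)"
    by (simp only: ctr_left)
  also have "\<dots> = phi K (cmat_adj U ** E ** cmat_adj V)"
    by (simp add: phi_def Re_sum cmat_of_real_def matrix_mul_assoc)
  finally show ?thesis by simp
qed

lemma phi_inner: "phi K X = inner (cmat_of_real K) X"
  by (simp add: phi_def inner_vec_def inner_complex_def cmat_of_real_def mult.commute)

lemma bl_phi: "bounded_linear (phi K)"
  unfolding phi_inner[abs_def] by (rule bounded_linear_inner_right)

lemma bl_cnj: "bounded_linear (cmat_cnj :: complex^'n^'m \<Rightarrow> _)"
proof (rule bounded_linear_intro[where K=1])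
  fix X Y :: "complex^'n^'m"
  show "cmat_cnj (X + Y) = cmat_cnj X + cmat_cnj Y" by (rule cnj_add)
next
  fix r and X :: "complex^'n^'m"
  show "cmat_cnj (r *\<^sub>R X) = r *\<^sub>R cmat_cnj X" by (simp add: cmat_cnj_def vec_eq_iff)
next
  fix X :: "complex^'n^'m"
  have "(norm (cmat_cnj X))^2 = (norm X)^2" by (simp add: norm_mat_sq cmat_cnj_def)
  then show "norm (cmat_cnj X) \<le> norm X * 1" by (simp add: power2_eq_iff_nonneg)
qed

lemma real_of_cnj_fix: "cnj z = z \<Longrightarrow> complex_of_real (Re z) = z"
  by (simp add: complex_eq_iff)

context setting begin

lemma ident:
  fixes Ic :: "complex^'np \<Rightarrow> complex^'c^'d" and En :: "complex^'np \<Rightarrow> complex^'nf^'no"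
    and T :: "complex^'np \<Rightarrow> real^'c^'d \<Rightarrow> complex^'nf^'no" and w :: "complex^'np \<Rightarrow> real"
  assumes Icm: "Ic \<in> borel_measurable \<mu>"
    and Ic_bd: "AE p in \<mu>. norm (Ic p) \<le> w p * norm (En p)"
    and wm: "w \<in> borel_measurable \<mu>" and wL2: "integrable \<mu> (\<lambda>p. (w p)^2)"
    and Em: "En \<in> borel_measurable \<mu>" and EL2: "integrable \<mu> (\<lambda>p. (norm (En p))^2)"
    and Tm: "\<And>K. (\<lambda>p. T p K) \<in> borel_measurable \<mu>"
    and Ic_cnj: "AE p in \<mu>. Ic (cvec_cnj p) = cmat_cnj (Ic p)"
    and pw: "\<And>K. AE p in \<mu>. phi K (Ic p) = - inner (En p) (T p K)"
  shows "\<exists>G. (\<forall>K. G \<bullet> K = -2 * (\<integral>p. inner (En p) (T p K) \<partial>\<mu>)) \<and> cmat_of_real G = csmult 2 (\<integral>p. Ic p \<partial>\<mu>)"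
proof -
  have Ici: "integrable \<mu> Ic"
  proof (rule Bochner_Integration.integrable_bound[where f="\<lambda>p. (w p)^2 + (norm (En p))^2"])
    show "integrable \<mu> (\<lambda>p. (w p)^2 + (norm (En p))^2)" using wL2 EL2 by simp
    show "Ic \<in> borel_measurable \<mu>" by (rule Icm)
    show "AE p in \<mu>. norm (Ic p) \<le> norm ((w p)^2 + (norm (En p))^2)"
      using Ic_bd
    proof eventually_elim
      case (elim p)
      have "w p * norm (En p) \<le> (w p)^2 + (norm (En p))^2"
      proof -
        have "0 \<le> (w p - norm (En p))^2" "0 \<le> (w p + norm (En p))^2" by simp_all
        then show ?thesis by (simp add: power2_diff power2_sum)
      qed
      then show ?case using elim by simp
    qed
  qed
  define S where "S = (\<integral>p. Ic p \<partial>\<mu>)"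
  have Scnj: "cmat_cnj S = S"
  proof -
    have m1: "(\<lambda>p. Ic (cvec_cnj p)) \<in> borel_measurable \<mu>"
      using measurable_compose[OF cnj_measurable Icm] by (simp add: comp_def)
    have m2: "(\<lambda>p. cmat_cnj (Ic p)) \<in> borel_measurable \<mu>" by (rule cnj_meas[OF Icm])
    have "S = (\<integral>p. Ic (cvec_cnj p) \<partial>\<mu>)" unfolding S_def by (rule integral_cnj_invariant[OF Icm, symmetric])
    also have "\<dots> = (\<integral>p. cmat_cnj (Ic p) \<partial>\<mu>)" by (rule integral_cong_AE[OF m1 m2 Ic_cnj])
    also have "\<dots> = cmat_cnj S" unfolding S_def by (rule integral_bounded_linear[OF bl_cnj Ici])
    finally show ?thesis by simp
  qed
  define G where "G = (\<chi> a b. 2 * Re (S$a$b))"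
  have "cmat_of_real G = csmult 2 S"
  proof -
    have "cnj (S$a$b) = S$a$b" for a b using Scnj by (simp add: cmat_cnj_def vec_eq_iff)
    then show ?thesis by (simp add: G_def cmat_of_real_def csmult_def vec_eq_iff real_of_cnj_fix)
  qed
  moreover have "G \<bullet> K = -2 * (\<integral>p. inner (En p) (T p K) \<partial>\<mu>)" for K
  proof -
    have "G \<bullet> K = 2 * phi K S"
      by (simp add: G_def phi_def inner_vec_def sum_distrib_left mult.assoc)
    also have "phi K S = (\<integral>p. phi K (Ic p) \<partial>\<mu>)"
      unfolding S_def by (rule integral_bounded_linear[OF bl_phi Ici, symmetric])
    also have "\<dots> = (\<integral>p. - inner (En p) (T p K) \<partial>\<mu>)"
    proof (rule integral_cong_AE)
      show "(\<lambda>p. phi K (Ic p)) \<in> borel_measurable \<mu>"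
        unfolding phi_inner by (intro borel_measurable_inner borel_measurable_const Icm)
      show "(\<lambda>p. - inner (En p) (T p K)) \<in> borel_measurable \<mu>"
        by (intro borel_measurable_uminus borel_measurable_inner Em Tm)
      show "AE p in \<mu>. phi K (Ic p) = - inner (En p) (T p K)" by (rule pw)
    qed
    also have "\<dots> = - (\<integral>p. inner (En p) (T p K) \<partial>\<mu>)" by simp
    finally show ?thesis by simp
  qed
  ultimately show ?thesis unfolding S_def by blast
qed

end


lemma scaleR_csmult: "r *\<^sub>R (X::complex^'n^'m) = csmult (complex_of_real r) X"
  by (simp add: csmult_def vec_eq_iff complex_eq_iff)

lemma norm_UKV: "norm ((U::complex^'d^'m) ** cmat_of_real (K::real^'c^'d) ** (V::complex^'n^'c)) \<le> norm U * norm K * norm V"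
proof -
  have "norm (U ** cmat_of_real K ** V) \<le> norm (U ** cmat_of_real K) * norm V" by (rule norm_mm)
  also have "\<dots> \<le> norm U * norm K * norm V"
    by (intro mult_right_mono) (use norm_mm[of U "cmat_of_real K"] in \<open>auto simp: norm_cmat_of_real\<close>)
  finally show ?thesis .
qed

lemma lin_UKV: "linear (\<lambda>K::real^'c^'d. (U::complex^'d^'m) ** cmat_of_real K ** (V::complex^'n^'c))"
proof (rule linearI)
  fix a b :: "real^'c^'d"
  show "U ** cmat_of_real (a + b) ** V = U ** cmat_of_real a ** V + U ** cmat_of_real b ** V"
    by (simp add: cmat_of_real_add matrix_add_ldistrib mm_add_r)
next
  fix r and a :: "real^'c^'d"
  show "U ** cmat_of_real (r *\<^sub>R a) ** V = r *\<^sub>R (U ** cmat_of_real a ** V)"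
    by (simp add: cmat_of_real_scaleR scaleR_csmult csmult_mult_left csmult_mult_right)
qed

lemma meas_UKV:
  fixes U :: "'p \<Rightarrow> complex^'d^'m" and V :: "'p \<Rightarrow> complex^'n^'c"
  assumes "U \<in> borel_measurable M" "V \<in> borel_measurable M"
  shows "(\<lambda>p. U p ** cmat_of_real (K::real^'c^'d) ** V p) \<in> borel_measurable M"
  by (intro mm_meas assms borel_measurable_const)

context setting begin

lemma case_generic:
  fixes Y :: "real^'c^'d \<Rightarrow> complex^'np \<Rightarrow> complex^'nf^'no" and H0 :: "real^'c^'d"
    and U :: "complex^'np \<Rightarrow> complex^'d^'no" and V :: "complex^'np \<Rightarrow> complex^'nf^'c"
    and Ic :: "complex^'np \<Rightarrow> complex^'c^'d"
  assumes Ym: "\<And>H. Y H \<in> borel_measurable \<mu>" and Y0: "Y H0 = yhat alpha beta gamma A B C"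
    and Um: "U \<in> borel_measurable \<mu>" and Vm: "V \<in> borel_measurable \<mu>"
    and c0: "0 \<le> cbd" and UV_bd: "AE p in \<mu>. norm (U p) * norm (V p) \<le> cbd * rr p"
    and dpos: "0 < d"
    and Rbd: "AE p in \<mu>. \<forall>H. norm (H - H0) < d \<longrightarrow>
       norm (Y H p - Y H0 p - U p ** cmat_of_real (H - H0) ** V p) \<le> cbd * rr p * (norm (H - H0))^2"
    and Icm: "Ic \<in> borel_measurable \<mu>"
    and Ic_eq: "AE p in \<mu>. Ic p = cmat_adj (- U p) ** (y p - yhat alpha beta gamma A B C p) ** cmat_adj (V p)"
    and Ic_cnj: "AE p in \<mu>. Ic (cvec_cnj p) = cmat_cnj (Ic p)"
  shows "\<exists>G. ((\<lambda>H. \<integral>p. (norm (y p - Y H p))^2 \<partial>\<mu>) has_derivative (\<lambda>K. G \<bullet> K)) (at H0)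
           \<and> cmat_of_real G = csmult 2 (\<integral>p. Ic p \<partial>\<mu>)"
proof -
  define T where "T p K = U p ** cmat_of_real K ** V p" for p and K :: "real^'c^'d"
  define g where "g p = cbd * rr p" for p
  have Tm: "(\<lambda>p. T p K) \<in> borel_measurable \<mu>" for K unfolding T_def by (rule meas_UKV[OF Um Vm])
  have gm: "g \<in> borel_measurable \<mu>" unfolding g_def[abs_def] by measurable
  have gL2: "integrable \<mu> (\<lambda>p. (g p)^2)" unfolding g_def using rr_L2 by (simp add: power_mult_distrib)
  have gpos: "0 \<le> g p" for p unfolding g_def using c0 rr_nonneg by simp
  have Tbd: "AE p in \<mu>. \<forall>K. norm (T p K) \<le> g p * norm K"
    using UV_bd
  proof eventually_elim
    case (elim p)
    show ?case
    proof
      fix K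
      have "norm (T p K) \<le> norm (U p) * norm K * norm (V p)" unfolding T_def by (rule norm_UKV)
      also have "\<dots> = (norm (U p) * norm (V p)) * norm K" by simp
      also have "\<dots> \<le> g p * norm K" unfolding g_def by (intro mult_right_mono elim) simp
      finally show "norm (T p K) \<le> g p * norm K" .
    qed
  qed
  have Rbd': "AE p in \<mu>. \<forall>H. norm (H - H0) < d \<longrightarrow>
                 norm (Y H p - Y H0 p - T p (H - H0)) \<le> g p * (norm (H - H0))^2"
    using Rbd unfolding T_def g_def .
  have EL2: "integrable \<mu> (\<lambda>p. (norm (y p - Y H0 p))^2)" unfolding Y0 by (rule E_L2)
  have der: "((\<lambda>H. \<integral>p. (norm (y p - Y H p))^2 \<partial>\<mu>) has_derivative
           (\<lambda>K. -2 * (\<integral>p. inner (y p - Y H0 p) (T p K) \<partial>\<mu>))) (at H0)"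
    by (rule core_deriv[OF Ym ym EL2 gm gL2 gpos Tm _ Tbd dpos Rbd']) (simp add: T_def lin_UKV)
  have Em: "(\<lambda>p. y p - Y H0 p) \<in> borel_measurable \<mu>" by (intro borel_measurable_diff ym Ym)
  have id: "\<exists>G. (\<forall>K. G \<bullet> K = -2 * (\<integral>p. inner (y p - Y H0 p) (T p K) \<partial>\<mu>)) \<and> cmat_of_real G = csmult 2 (\<integral>p. Ic p \<partial>\<mu>)"
  proof (rule ident[OF Icm _ gm gL2 Em EL2 Tm Ic_cnj])
    show "AE p in \<mu>. norm (Ic p) \<le> g p * norm (y p - Y H0 p)"
      using Ic_eq UV_bd
    proof eventually_elim
      case (elim p)
      have "norm (Ic p) \<le> norm (cmat_adj (- U p) ** (y p - Y H0 p)) * norm (cmat_adj (V p))"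
        unfolding elim(1) Y0 by (rule norm_mm)
      also have "\<dots> \<le> norm (cmat_adj (- U p)) * norm (y p - Y H0 p) * norm (cmat_adj (V p))"
        by (intro mult_right_mono norm_mm norm_ge_zero)
      also have "\<dots> = norm (U p) * norm (y p - Y H0 p) * norm (V p)"
        by (simp add: norm_adj)
      also have "\<dots> = (norm (U p) * norm (V p)) * norm (y p - Y H0 p)" by simp
      also have "\<dots> \<le> g p * norm (y p - Y H0 p)" unfolding g_def by (intro mult_right_mono elim(2)) simp
      finally show ?case .
    qed
    fix K :: "real^'c^'d"
    show "AE p in \<mu>. phi K (Ic p) = - inner (y p - Y H0 p) (T p K)"
      using Ic_eq
    proof eventually_elim
      case (elim p)
      have "phi K (Ic p) = inner (y p - Y H0 p) (- U p ** cmat_of_real K ** V p)"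
        unfolding elim Y0 by (rule tr_id)
      also have "\<dots> = - inner (y p - Y H0 p) (T p K)" by (simp add: T_def mm_neg_l)
      finally show ?case .
    qed
  qed
  then obtain G where G: "\<And>K. G \<bullet> K = -2 * (\<integral>p. inner (y p - Y H0 p) (T p K) \<partial>\<mu>)"
    "cmat_of_real G = csmult 2 (\<integral>p. Ic p \<partial>\<mu>)" by blast
  have "(\<lambda>K. G \<bullet> K) = (\<lambda>K. -2 * (\<integral>p. inner (y p - Y H0 p) (T p K) \<partial>\<mu>))" using G(1) by (rule ext)
  then have "((\<lambda>H. \<integral>p. (norm (y p - Y H p))^2 \<partial>\<mu>) has_derivative (\<lambda>K. G \<bullet> K)) (at H0)"
    using der by simp
  then show ?thesis using G(2) by blast
qed

end


context setting begin

lemma pmA_cnj: "p \<in> space \<mu> \<Longrightarrow> pmat alpha X (cvec_cnj p) = cmat_cnj (pmat alpha X p)"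
  by (rule pmat_cnj) (use alpha_cnj in blast)
lemma pmB_cnj: "p \<in> space \<mu> \<Longrightarrow> pmat beta X (cvec_cnj p) = cmat_cnj (pmat beta X p)"
  by (rule pmat_cnj) (use beta_cnj in blast)
lemma pmC_cnj: "p \<in> space \<mu> \<Longrightarrow> pmat gamma X (cvec_cnj p) = cmat_cnj (pmat gamma X p)"
  by (rule pmat_cnj) (use gamma_cnj in blast)

lemma Ai_cnj: assumes "good p" shows "Ai (cvec_cnj p) = cmat_cnj (Ai p)"
  using pmA_cnj[OF good_space[OF assms], of A] matrix_inv_cnj[OF good_inv[OF assms]] by metis

lemma xhat_cnj: "good p \<Longrightarrow> xhat alpha beta A B (cvec_cnj p) = cmat_cnj (xhat alpha beta A B p)"
  unfolding xhat_def by (simp add: Ai_cnj pmB_cnj good_space cnj_mult)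

lemma yhat_cnj: "good p \<Longrightarrow> yhat alpha beta gamma A B C (cvec_cnj p) = cmat_cnj (yhat alpha beta gamma A B C p)"
  unfolding yhat_def by (simp add: xhat_cnj pmC_cnj good_space cnj_mult)

lemma xdual_cnj: "good p \<Longrightarrow> xdual alpha gamma A C (cvec_cnj p) = cmat_cnj (xdual alpha gamma A C p)"
  unfolding xdual_def by (simp add: Ai_cnj pmC_cnj good_space cnj_mult cnj_adj)

lemma y_cnj': "p \<in> space \<mu> \<Longrightarrow> y (cvec_cnj p) = cmat_cnj (y p)"
  using y_cnj by simp

lemma Ap_m[measurable]: "(\<lambda>p. pmat alpha X p) \<in> borel_measurable \<mu>" by (rule pmat_meas) simp
lemma Bp_m[measurable]: "(\<lambda>p. pmat beta X p) \<in> borel_measurable \<mu>" by (rule pmat_meas) simp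
lemma Cp_m[measurable]: "(\<lambda>p. pmat gamma X p) \<in> borel_measurable \<mu>" by (rule pmat_meas) simp
lemma Ai_m[measurable]: "(\<lambda>p. Ai p) \<in> borel_measurable \<mu>" by (rule pinv_meas) simp
lemma xhat_m[measurable]: "xhat alpha beta A B \<in> borel_measurable \<mu>" by (rule xhat_meas) simp_all
lemma xdual_m[measurable]: "xdual alpha gamma A C \<in> borel_measurable \<mu>" by (rule xdual_meas) simp_all
lemma yhatH_m: fixes A' :: "'qa \<Rightarrow> real^'r^'r" shows "yhat alpha beta gamma A' B' C' \<in> borel_measurable \<mu>" by (rule yhat_meas) simp_all
lemma comp_cnj_m: assumes "f \<in> borel_measurable \<mu>" shows "(\<lambda>p. f (cvec_cnj p)) \<in> borel_measurable \<mu>"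
  using measurable_compose[OF cnj_measurable assms] by (simp add: comp_def)

lemma caseB: "\<exists>G. ((\<lambda>H. Jcost \<mu> y alpha beta gamma A (B(j := H)) C) has_derivative (\<lambda>H. G \<bullet> H)) (at (B j))
          \<and> cmat_of_real G = csmult 2 (\<integral>p. csmult (beta j (cvec_cnj p))
               (xdual alpha gamma A C p ** (yhat alpha beta gamma A B C p - y p)) \<partial>\<mu>)"
proof -
  let ?n1 = "norm (mat 1 :: complex^'nf^'nf)"
  define U where "U p = csmult (beta j p) (Cp p ** Ai p)" for p
  define V where "V p = (mat 1 :: complex^'nf^'nf)" for p :: "complex^'np"
  define Ic where "Ic p = csmult (beta j (cvec_cnj p))
               (xdual alpha gamma A C p ** (yhat alpha beta gamma A B C p - y p))" for p
  have "\<exists>G. ((\<lambda>H. \<integral>p. (norm (y p - yhat alpha beta gamma A (B(j := H)) C p))^2 \<partial>\<mu>) has_derivative (\<lambda>K. G \<bullet> K)) (at (B j))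
           \<and> cmat_of_real G = csmult 2 (\<integral>p. Ic p \<partial>\<mu>)"
  proof (rule case_generic[where U=U and V=V and cbd="?n1 * nC * MA" and d=1])
    show "\<And>H. yhat alpha beta gamma A (B(j := H)) C \<in> borel_measurable \<mu>" by (rule yhatH_m)
    show "yhat alpha beta gamma A (B(j := B j)) C = yhat alpha beta gamma A B C" by simp
    show "U \<in> borel_measurable \<mu>" unfolding U_def[abs_def] by measurable
    show "V \<in> borel_measurable \<mu>" unfolding V_def[abs_def] by simp
    show "0 \<le> ?n1 * nC * MA" using nC_nonneg MA_nonneg by simp
    show "AE p in \<mu>. norm (U p) * norm (V p) \<le> ?n1 * nC * MA * rr p"
      using AE_good
    proof eventually_elim
      case (elim p)
      have "norm (U p) \<le> cmod (beta j p) * (norm (Cp p) * norm (Ai p))"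
        unfolding U_def norm_csmult by (intro mult_left_mono norm_mm) simp
      also have "\<dots> \<le> sb p * (norm (Cp p) * norm (Ai p))"
        unfolding sb_def by (intro mult_right_mono member_le_sum) auto
      also have "\<dots> \<le> nC * MA * rr p" using QB_bd[OF elim] by (simp add: ac_simps)
      finally have "norm (U p) * ?n1 \<le> nC * MA * rr p * ?n1" by (intro mult_right_mono) auto
      then show ?case by (simp add: V_def ac_simps)
    qed
    show "(0::real) < 1" by simp
    show "AE p in \<mu>. \<forall>H. norm (H - B j) < 1 \<longrightarrow>
       norm (yhat alpha beta gamma A (B(j := H)) C p - yhat alpha beta gamma A (B(j := B j)) C p
             - U p ** cmat_of_real (H - B j) ** V p) \<le> ?n1 * nC * MA * rr p * (norm (H - B j))^2"
    proof (intro AE_I2 allI impI)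
      fix p H
      have "yhat alpha beta gamma A (B(j := H)) C p - yhat alpha beta gamma A (B(j := B j)) C p
             - U p ** cmat_of_real (H - B j) ** V p = 0"
        unfolding yhat_def xhat_def U_def V_def
        by (simp add: pmat_upd matrix_add_ldistrib csmult_mult_left csmult_mult_right matrix_mul_assoc)
      then show "norm (yhat alpha beta gamma A (B(j := H)) C p - yhat alpha beta gamma A (B(j := B j)) C p
             - U p ** cmat_of_real (H - B j) ** V p) \<le> ?n1 * nC * MA * rr p * (norm (H - B j))^2"
        using nC_nonneg MA_nonneg rr_nonneg by simp
    qed
    show "Ic \<in> borel_measurable \<mu>" unfolding Ic_def[abs_def]
      by (intro cs_meas comp_cnj_m bm mm_meas xdual_m borel_measurable_diff yhat_m ym)
    show "AE p in \<mu>. Ic p = cmat_adj (- U p) ** (y p - yhat alpha beta gamma A B C p) ** cmat_adj (V p)"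
    proof (rule AE_I2)
      fix p assume p: "p \<in> space \<mu>"
      show "Ic p = cmat_adj (- U p) ** (y p - yhat alpha beta gamma A B C p) ** cmat_adj (V p)"
        unfolding Ic_def U_def V_def xdual_def using beta_cnj p
        by (simp add: adj_neg adj_csmult adj_mult adj_mat1 mm_neg_l csmult_mult_left csmult_mult_right
                      mm_diff_l matrix_mul_assoc csmult_diff csmult_neg)
    qed
    show "AE p in \<mu>. Ic (cvec_cnj p) = cmat_cnj (Ic p)"
      using AE_good
    proof eventually_elim
      case (elim p)
      show ?case unfolding Ic_def
        using beta_cnj good_space[OF elim]
        by (simp add: xdual_cnj[OF elim] yhat_cnj[OF elim] y_cnj'[OF good_space[OF elim]]
                      cnj_csmult cnj_mult cnj_diff)
    qed
  qed
  then show ?thesis unfolding Jcost_def Ic_def .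
qed

end


context setting begin

lemma caseC: "\<exists>G. ((\<lambda>H. Jcost \<mu> y alpha beta gamma A B (C(k := H))) has_derivative (\<lambda>H. G \<bullet> H)) (at (C k))
          \<and> cmat_of_real G = csmult 2 (\<integral>p. csmult (gamma k (cvec_cnj p))
               ((yhat alpha beta gamma A B C p - y p) ** cmat_adj (xhat alpha beta A B p)) \<partial>\<mu>)"
proof -
  let ?n1 = "norm (mat 1 :: complex^'no^'no)"
  define U where "U p = csmult (gamma k p) (mat 1 :: complex^'no^'no)" for p
  define V where "V p = xhat alpha beta A B p" for p
  define Ic where "Ic p = csmult (gamma k (cvec_cnj p))
               ((yhat alpha beta gamma A B C p - y p) ** cmat_adj (xhat alpha beta A B p))" for p
  have "\<exists>G. ((\<lambda>H. \<integral>p. (norm (y p - yhat alpha beta gamma A B (C(k := H)) p))^2 \<partial>\<mu>) has_derivative (\<lambda>K. G \<bullet> K)) (at (C k))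
           \<and> cmat_of_real G = csmult 2 (\<integral>p. Ic p \<partial>\<mu>)"
  proof (rule case_generic[where U=U and V=V and cbd="?n1 * nB * MA" and d=1])
    show "\<And>H. yhat alpha beta gamma A B (C(k := H)) \<in> borel_measurable \<mu>" by (rule yhatH_m)
    show "yhat alpha beta gamma A B (C(k := C k)) = yhat alpha beta gamma A B C" by simp
    show "U \<in> borel_measurable \<mu>" unfolding U_def[abs_def] by measurable
    show "V \<in> borel_measurable \<mu>" unfolding V_def[abs_def] by (rule xhat_m)
    show "0 \<le> ?n1 * nB * MA" using nB_nonneg MA_nonneg by simp
    show "AE p in \<mu>. norm (U p) * norm (V p) \<le> ?n1 * nB * MA * rr p"
      using AE_good
    proof eventually_elim
      case (elim p)
      have "norm (V p) \<le> norm (Ai p) * norm (Bp p)" unfolding V_def xhat_def by (rule norm_mm)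
      have "norm (U p) * norm (V p) \<le> (cmod (gamma k p) * ?n1) * (norm (Ai p) * norm (Bp p))"
        unfolding U_def norm_csmult by (intro mult_left_mono) (auto simp: V_def xhat_def intro: norm_mm)
      also have "\<dots> \<le> (sc p * ?n1) * (norm (Ai p) * norm (Bp p))"
        unfolding sc_def by (intro mult_right_mono member_le_sum) auto
      also have "\<dots> = ?n1 * (sc p * norm (Ai p) * norm (Bp p))" by (simp add: ac_simps)
      also have "\<dots> \<le> ?n1 * (nB * MA * rr p)" by (intro mult_left_mono QC_bd[OF elim]) simp
      finally show ?case by (simp add: ac_simps)
    qed
    show "(0::real) < 1" by simp
    show "AE p in \<mu>. \<forall>H. norm (H - C k) < 1 \<longrightarrow>
       norm (yhat alpha beta gamma A B (C(k := H)) p - yhat alpha beta gamma A B (C(k := C k)) p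
             - U p ** cmat_of_real (H - C k) ** V p) \<le> ?n1 * nB * MA * rr p * (norm (H - C k))^2"
    proof (intro AE_I2 allI impI)
      fix p H
      have "yhat alpha beta gamma A B (C(k := H)) p - yhat alpha beta gamma A B (C(k := C k)) p
             - U p ** cmat_of_real (H - C k) ** V p = 0"
        unfolding yhat_def U_def V_def
        by (simp add: pmat_upd mm_add_r csmult_mult_left csmult_mult_right matrix_mul_assoc)
      then show "norm (yhat alpha beta gamma A B (C(k := H)) p - yhat alpha beta gamma A B (C(k := C k)) p
             - U p ** cmat_of_real (H - C k) ** V p) \<le> ?n1 * nB * MA * rr p * (norm (H - C k))^2"
        using nB_nonneg MA_nonneg rr_nonneg by simp
    qed
    show "Ic \<in> borel_measurable \<mu>" unfolding Ic_def[abs_def]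
      by (intro cs_meas comp_cnj_m gm mm_meas adj_meas xhat_m borel_measurable_diff yhat_m ym)
    show "AE p in \<mu>. Ic p = cmat_adj (- U p) ** (y p - yhat alpha beta gamma A B C p) ** cmat_adj (V p)"
    proof (rule AE_I2)
      fix p assume p: "p \<in> space \<mu>"
      show "Ic p = cmat_adj (- U p) ** (y p - yhat alpha beta gamma A B C p) ** cmat_adj (V p)"
        unfolding Ic_def U_def V_def using gamma_cnj p
        by (simp add: adj_neg adj_csmult adj_mult adj_mat1 mm_neg_l csmult_mult_left csmult_mult_right
                      mm_diff_l mm_diff_r matrix_mul_assoc csmult_diff csmult_neg)
    qed
    show "AE p in \<mu>. Ic (cvec_cnj p) = cmat_cnj (Ic p)"
      using AE_good
    proof eventually_elim
      case (elim p)
      show ?case unfolding Ic_def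
        using gamma_cnj good_space[OF elim]
        by (simp add: xhat_cnj[OF elim] yhat_cnj[OF elim] y_cnj'[OF good_space[OF elim]]
                      cnj_csmult cnj_mult cnj_diff cnj_adj)
    qed
  qed
  then show ?thesis unfolding Jcost_def Ic_def .
qed

end


lemma norm_mm_le: "norm (X::complex^'k^'m) \<le> a \<Longrightarrow> norm (Y::complex^'n^'k) \<le> b \<Longrightarrow> norm (X ** Y) \<le> a * b"
  by (rule order.trans[OF norm_mm]) (intro mult_mono, auto intro: order.trans[OF norm_ge_zero])

context setting begin

lemma caseA: "\<exists>G. ((\<lambda>H. Jcost \<mu> y alpha beta gamma (A(i := H)) B C) has_derivative (\<lambda>H. G \<bullet> H)) (at (A i))
          \<and> cmat_of_real G = csmult 2 (\<integral>p. csmult (alpha i (cvec_cnj p))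
               (xdual alpha gamma A C p ** (y p - yhat alpha beta gamma A B C p)
                 ** cmat_adj (xhat alpha beta A B p)) \<partial>\<mu>)"
proof -
  define m where "m = Mi i"
  define KQ where "KQ = nC * nB * MA"
  define cbd where "cbd = 2 * (m + 1)^2 * KQ"
  define d where "d = 1 / (2 * (m + 1))"
  have m0: "0 \<le> m" unfolding m_def by (rule Mi(1))
  have KQ0: "0 \<le> KQ" unfolding KQ_def using nC_nonneg nB_nonneg MA_nonneg by simp
  have cbd0: "0 \<le> cbd" unfolding cbd_def using KQ0 by simp
  have dpos: "0 < d" unfolding d_def using m0 by simp
  define U where "U p = - csmult (alpha i p) (Cp p ** Ai p)" for p
  define V where "V p = xhat alpha beta A B p" for p
  define Ic where "Ic p = csmult (alpha i (cvec_cnj p))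
               (xdual alpha gamma A C p ** (y p - yhat alpha beta gamma A B C p)
                 ** cmat_adj (xhat alpha beta A B p))" for p
  have "\<exists>G. ((\<lambda>H. \<integral>p. (norm (y p - yhat alpha beta gamma (A(i := H)) B C p))^2 \<partial>\<mu>) has_derivative (\<lambda>K. G \<bullet> K)) (at (A i))
           \<and> cmat_of_real G = csmult 2 (\<integral>p. Ic p \<partial>\<mu>)"
  proof (rule case_generic[where U=U and V=V and cbd=cbd and d=d])
    show "\<And>H. yhat alpha beta gamma (A(i := H)) B C \<in> borel_measurable \<mu>" by (rule yhatH_m)
    show "yhat alpha beta gamma (A(i := A i)) B C = yhat alpha beta gamma A B C" by simp
    show "U \<in> borel_measurable \<mu>" unfolding U_def[abs_def] by measurable
    show "V \<in> borel_measurable \<mu>" unfolding V_def[abs_def] by (rule xhat_m)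
    show "0 \<le> cbd" by (rule cbd0)
    show "AE p in \<mu>. norm (U p) * norm (V p) \<le> cbd * rr p"
      using AE_good
    proof eventually_elim
      case (elim p)
      have "norm (U p) * norm (V p) \<le> (cmod (alpha i p) * (norm (Cp p) * norm (Ai p))) * (norm (Ai p) * norm (Bp p))"
        unfolding U_def V_def xhat_def norm_minus_cancel norm_csmult
        by (intro mult_mono mult_left_mono norm_mm) auto
      also have "\<dots> = (cmod (alpha i p) * norm (Ai p)) * (norm (Cp p) * norm (Ai p) * norm (Bp p))"
        by (simp add: ac_simps)
      also have "\<dots> \<le> m * (KQ * rr p)"
        unfolding m_def KQ_def by (intro mult_mono good_Mi[OF elim] Q_bd[OF elim] Mi(1)) auto
      also have "\<dots> \<le> cbd * rr p"
      proof -
        have "m \<le> 2 * (m + 1)^2" using m0 by (simp add: power2_eq_square algebra_simps)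
        then have "m * KQ \<le> 2 * (m + 1)^2 * KQ" by (intro mult_right_mono KQ0)
        then show ?thesis unfolding cbd_def using rr_nonneg[of p]
          by (metis mult.assoc mult_right_mono)
      qed
      finally show ?case .
    qed
    show "0 < d" by (rule dpos)
    show "AE p in \<mu>. \<forall>H. norm (H - A i) < d \<longrightarrow>
       norm (yhat alpha beta gamma (A(i := H)) B C p - yhat alpha beta gamma (A(i := A i)) B C p
             - U p ** cmat_of_real (H - A i) ** V p) \<le> cbd * rr p * (norm (H - A i))^2"
      using AE_good
    proof eventually_elim
      case (elim p)
      show ?case
      proof (intro allI impI)
        fix H assume Hd: "norm (H - A i) < d"
        define K where "K = H - A i"
        define P where "P = csmult (alpha i p) (cmat_of_real K)"
        define Z where "Z = matrix_inv (Ap p + P)"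
        have aM: "cmod (alpha i p) * norm (Ai p) \<le> m" unfolding m_def by (rule good_Mi[OF elim])
        have nP: "norm P = cmod (alpha i p) * norm K" unfolding P_def by (simp add: norm_csmult norm_cmat_of_real)
        have "norm (Ai p ** P) \<le> norm (Ai p) * (cmod (alpha i p) * norm K)" using norm_mm nP by metis
        also have "\<dots> = (cmod (alpha i p) * norm (Ai p)) * norm K" by simp
        also have "\<dots> \<le> m * d" using aM Hd m0 unfolding K_def by (intro mult_mono) auto
        also have "\<dots> \<le> 1/2" unfolding d_def using m0 by (simp add: field_simps)
        finally have small: "norm (Ai p ** P) \<le> 1/2" .
        note pt = perturb[OF good_inv[OF elim] small]
        have nZ: "norm Z \<le> 2 * norm (Ai p)" unfolding Z_def by (rule pt(2))
        have idZ: "Ai p = Z + Ai p ** P ** Z" unfolding Z_def by (rule pt(3))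
        have YH: "yhat alpha beta gamma (A(i := H)) B C p = Cp p ** (Z ** Bp p)"
          unfolding yhat_def xhat_def Z_def P_def K_def by (simp add: pmat_upd)
        have Y0: "yhat alpha beta gamma (A(i := A i)) B C p = Cp p ** (Ai p ** Bp p)"
          unfolding yhat_def xhat_def by simp
        have UKV: "U p ** cmat_of_real (H - A i) ** V p = - (Cp p ** (Ai p ** (P ** (Ai p ** Bp p))))"
          unfolding U_def V_def xhat_def P_def K_def
          by (simp add: mm_neg_l csmult_mult_left csmult_mult_right matrix_mul_assoc)
        have "yhat alpha beta gamma (A(i := H)) B C p - yhat alpha beta gamma (A(i := A i)) B C p
             - U p ** cmat_of_real (H - A i) ** V p = Cp p ** (Ai p ** (P ** (Ai p ** (P ** (Z ** Bp p)))))"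
          unfolding YH Y0 UKV by (rule remainder_identity[OF idZ])
        also have "norm \<dots> \<le> norm (Cp p) * (norm (Ai p) * ((cmod (alpha i p) * norm K) * (norm (Ai p) *
                     ((cmod (alpha i p) * norm K) * ((2 * norm (Ai p)) * norm (Bp p))))))"
          by (intro norm_mm_le order.refl nZ) (simp_all add: nP)
        also have "\<dots> = 2 * (cmod (alpha i p) * norm (Ai p))^2 * (norm K)^2 * (norm (Cp p) * norm (Ai p) * norm (Bp p))"
          by (simp add: power2_eq_square ac_simps)
        also have "\<dots> \<le> 2 * m^2 * (norm K)^2 * (KQ * rr p)"
        proof -
          have "(cmod (alpha i p) * norm (Ai p))^2 \<le> m^2" using aM by (intro power_mono) auto
          moreover have "norm (Cp p) * norm (Ai p) * norm (Bp p) \<le> KQ * rr p" unfolding KQ_def by (rule Q_bd[OF elim])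
          ultimately have a: "(cmod (alpha i p) * norm (Ai p))^2 \<le> m^2" and b: "norm (Cp p) * norm (Ai p) * norm (Bp p) \<le> KQ * rr p" by auto
          have "2 * (cmod (alpha i p) * norm (Ai p))^2 * (norm K)^2 \<le> 2 * m^2 * (norm K)^2"
            using a by (intro mult_right_mono mult_left_mono) auto
          then show ?thesis by (rule mult_mono[OF _ b]) auto
        qed
        also have "\<dots> \<le> cbd * rr p * (norm K)^2"
        proof -
          have "2 * m^2 \<le> 2 * (m + 1)^2" using m0 by (intro mult_left_mono power_mono) auto
          then have "2 * m^2 * (KQ * rr p) \<le> 2 * (m + 1)^2 * (KQ * rr p)"
            using KQ0 rr_nonneg[of p] by (intro mult_right_mono) auto
          then have "2 * m^2 * (KQ * rr p) * (norm K)^2 \<le> 2 * (m + 1)^2 * (KQ * rr p) * (norm K)^2"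
            by (rule mult_right_mono) simp
          then show ?thesis unfolding cbd_def by (simp add: ac_simps)
        qed
        finally show "norm (yhat alpha beta gamma (A(i := H)) B C p - yhat alpha beta gamma (A(i := A i)) B C p
             - U p ** cmat_of_real (H - A i) ** V p) \<le> cbd * rr p * (norm (H - A i))^2"
          unfolding K_def .
      qed
    qed
    show "Ic \<in> borel_measurable \<mu>" unfolding Ic_def[abs_def]
      by (intro cs_meas comp_cnj_m am mm_meas adj_meas xhat_m xdual_m borel_measurable_diff yhat_m ym)
    show "AE p in \<mu>. Ic p = cmat_adj (- U p) ** (y p - yhat alpha beta gamma A B C p) ** cmat_adj (V p)"
    proof (rule AE_I2)
      fix p assume p: "p \<in> space \<mu>"
      show "Ic p = cmat_adj (- U p) ** (y p - yhat alpha beta gamma A B C p) ** cmat_adj (V p)"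
        unfolding Ic_def U_def V_def xdual_def using alpha_cnj p
        by (simp add: adj_neg adj_csmult adj_mult csmult_mult_left csmult_mult_right matrix_mul_assoc)
    qed
    show "AE p in \<mu>. Ic (cvec_cnj p) = cmat_cnj (Ic p)"
      using AE_good
    proof eventually_elim
      case (elim p)
      show ?case unfolding Ic_def
        using alpha_cnj good_space[OF elim]
        by (simp add: xdual_cnj[OF elim] xhat_cnj[OF elim] yhat_cnj[OF elim] y_cnj'[OF good_space[OF elim]]
                      cnj_csmult cnj_mult cnj_diff cnj_adj)
    qed
  qed
  then show ?thesis unfolding Jcost_def Ic_def .
qed

end

theorem theorem1:
  fixes \<mu> :: "(complex^'np) measure"
    and y :: "complex^'np \<Rightarrow> complex^'nf^'no"
    and alpha :: "'qa::finite \<Rightarrow> complex^'np \<Rightarrow> complex"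
    and beta :: "'qb::finite \<Rightarrow> complex^'np \<Rightarrow> complex"
    and gamma :: "'qc::finite \<Rightarrow> complex^'np \<Rightarrow> complex"
    and A :: "'qa \<Rightarrow> real^'r^'r"
    and B :: "'qb \<Rightarrow> real^'nf^'r"
    and C :: "'qc \<Rightarrow> real^'r^'no"
  assumes P_cnj: "\<forall>p\<in>space \<mu>. cvec_cnj p \<in> space \<mu>"
    and S_cnj: "\<forall>S\<in>sets \<mu>. cvec_cnj ` S \<in> sets \<mu>"
    and mu_cnj: "\<forall>S\<in>sets \<mu>. emeasure \<mu> (cvec_cnj ` S) = emeasure \<mu> S"
    and y_meas: "y \<in> borel_measurable \<mu>"
    and y_L2: "(\<integral>\<^sup>+ p. ennreal ((norm (y p))\<^sup>2) \<partial>\<mu>) < \<infinity>"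
    and y_cnj: "\<forall>p\<in>space \<mu>. cmat_cnj (y p) = y (cvec_cnj p)"
    and alpha_meas: "\<forall>i. alpha i \<in> borel_measurable \<mu>"
    and beta_meas: "\<forall>j. beta j \<in> borel_measurable \<mu>"
    and gamma_meas: "\<forall>k. gamma k \<in> borel_measurable \<mu>"
    and alpha_cnj: "\<forall>i. \<forall>p\<in>space \<mu>. alpha i (cvec_cnj p) = cnj (alpha i p)"
    and beta_cnj: "\<forall>j. \<forall>p\<in>space \<mu>. beta j (cvec_cnj p) = cnj (beta j p)"
    and gamma_cnj: "\<forall>k. \<forall>p\<in>space \<mu>. gamma k (cvec_cnj p) = cnj (gamma k p)"
    and ratio_L2: "(\<integral>\<^sup>+ p. (ennreal ((\<Sum>j\<in>UNIV. cmod (beta j p)) * (\<Sum>k\<in>UNIV. cmod (gamma k p)))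
                        / ennreal (\<Sum>i\<in>UNIV. cmod (alpha i p)))\<^sup>2 \<partial>\<mu>) < \<infinity>"
    and adm: "admissible \<mu> alpha A"
  shows
    "(\<forall>i. \<exists>G. ((\<lambda>H. Jcost \<mu> y alpha beta gamma (A(i := H)) B C) has_derivative (\<lambda>H. G \<bullet> H)) (at (A i))
          \<and> cmat_of_real G = csmult 2 (\<integral>p. csmult (alpha i (cvec_cnj p))
               (xdual alpha gamma A C p ** (y p - yhat alpha beta gamma A B C p)
                 ** cmat_adj (xhat alpha beta A B p)) \<partial>\<mu>))
   \<and> (\<forall>j. \<exists>G. ((\<lambda>H. Jcost \<mu> y alpha beta gamma A (B(j := H)) C) has_derivative (\<lambda>H. G \<bullet> H)) (at (B j))
          \<and> cmat_of_real G = csmult 2 (\<integral>p. csmult (beta j (cvec_cnj p))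
               (xdual alpha gamma A C p ** (yhat alpha beta gamma A B C p - y p)) \<partial>\<mu>))
   \<and> (\<forall>k. \<exists>G. ((\<lambda>H. Jcost \<mu> y alpha beta gamma A B (C(k := H))) has_derivative (\<lambda>H. G \<bullet> H)) (at (C k))
          \<and> cmat_of_real G = csmult 2 (\<integral>p. csmult (gamma k (cvec_cnj p))
               ((yhat alpha beta gamma A B C p - y p) ** cmat_adj (xhat alpha beta A B p)) \<partial>\<mu>))"
  proof -
  have S: "setting \<mu> y alpha beta gamma A"
    by (unfold_locales) (fact assms)+
  show ?thesis
    using setting.caseA[OF S] setting.caseB[OF S] setting.caseC[OF S] by blast
qed

end
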